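(* Suppose the budget and utility parameters of users are drawn i.i.d. from a discrete distribution $\mathcal{D}$ with finite support $\{(\tilde w_k,\tilde{\mathbf{u}}_k)\}_{k=1}^K$ and probabilities $q_k$, satisfying that for each good $j$, $\mathbb{P}_{\mathcal{D}}(u_j>0)>0$. Let $\boldsymbol{\pi}$ be the adaptive expected equilibrium pricing policy described below, and let $0<\underline{p}\le\bar p$ be lower and upper bounds on the prices, i.e., $\underline{p}\le p_j^t\le\bar p$ for all goods $j$ and users $t\in[n]$. Let $\mathbf{x}_1,\dots,\mathbf{x}_n$ be the allocations where, for a user $t$ of type $k$, $\mathbf{x}_t=\mathbf{z}_k^*$ for an optimal solution $(\mathbf{z}_1^*,\dots,\mathbf{z}_K^* )$ of $CE(\mathbf{d}_t)$ if $t\le\tau$, and of $CE(\mathbf{d})$ if $t>\tau$, where $\tau$ is the first time at which $\mathbf{d}_t\notin[\mathbf{d}-\Delta,\mathbf{d}+\Delta]$. Then the expected constraint violation satisfies $V_n(\boldsymbol{\pi})\le O(1)$ and the expected regret satisfies $R_n(\boldsymbol{\pi})\le O(\log n)$.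
   Context: Online Fisher market: $m$ divisible goods, good $j$ with capacity $c_j=nd_j$, $\mathbf{d}>\mathbf{0}$; $n$ users arrive sequentially with budget $w_t>0$ and utility vector $\mathbf{u}_t\ge\mathbf{0}$, $(w_t,\mathbf{u}_t)$ i.i.d. from $\mathcal{D}$, where $\mathbb{P}((w_t,\mathbf{u}_t)=(\tilde w_k,\tilde{\mathbf{u}}_k))=q_k$, $\sum_k q_k=1$, budgets in $[\underline w,\bar w]$ with $\underline w>0$. For a vector $\mathbf{d}'>\mathbf{0}$, the certainty-equivalent problem $CE(\mathbf{d}')$ is $\max_{\mathbf{z}_k\in\mathbb{R}^m}\sum_{k=1}^K q_k\tilde w_k\log(\sum_j\tilde u_{kj}z_{kj})$ s.t. $\sum_{k}q_kz_{kj}\le d'_j$ for all $j$, $z_{kj}\ge0$. Adaptive expected equilibrium pricing (with threshold vector $\mathbf{0}<\Delta<\mathbf{d}$): set $\mathbf{d}_1=\mathbf{c}/n=\mathbf{d}$; for $t=1,\dots,n$: if $\mathbf{d}_{t'}\in[\mathbf{d}-\Delta,\mathbf{d}+\Delta]$ for all $t'\le t$, set $\mathbf{p}^t$ to the optimal dual variables of the capacity constraints of $CE(\mathbf{d}_t)$, otherwise to those of $CE(\mathbf{d})$; user $t$ receives $\mathbf{x}_t$ (an optimal bundle for the user's problem $\max\mathbf{u}_t^\top\mathbf{x}$ s.t. $(\mathbf{p}^t)^\top\mathbf{x}\le w_t,\mathbf{x}\ge0$); remaining capacities $\mathbf{c}_{t+1}=\mathbf{c}_t-\mathbf{x}_t$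 (with $\mathbf{c}_1=\mathbf{c}$) and $\mathbf{d}_{t+1}=\mathbf{c}_{t+1}/(n-t)$. Offline optimum $U_n^*=\max\{\sum_t w_t\log(\sum_j u_{tj}x_{tj}):\sum_t x_{tj}\le c_j,\ x\ge0\}$; $U_n(\boldsymbol{\pi})=\sum_t w_t\log(\mathbf{u}_t^\top\mathbf{x}_t)$; $R_n=\mathbb{E}[U_n^*-U_n(\boldsymbol{\pi})]$; $V_n=\mathbb{E}[\|(\sum_t\mathbf{x}_t-\mathbf{c})_+\|_2]$. Asymptotic notation is as $n\to\infty$ with $m,K,\mathcal{D},\mathbf{d},\Delta,\underline p,\bar p$ fixed. *)

theory Defs
  imports "HOL-Analysis.Analysis"
begin

text \<open>Conventions: goods are indexed by j < m, types (support points of the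
distribution) by k < K, users by t < n (0-based: user t is the paper's user t+1).
Vectors are functions nat \<Rightarrow> real; a CE solution z is indexed as z k j.\<close>

definition in_box :: "nat \<Rightarrow> (nat \<Rightarrow> real) \<Rightarrow> (nat \<Rightarrow> real) \<Rightarrow> (nat \<Rightarrow> real) \<Rightarrow> bool" where
  "in_box m d Delta v \<longleftrightarrow> (\<forall>j<m. d j - Delta j \<le> v j \<and> v j \<le> d j + Delta j)"

text \<open>Certainty-equivalent problem CE(d').  Points with u_k . z_k = 0 have objective
-infinity and are excluded from the domain (they can never be optimal).\<close>

definition CE_obj :: "nat \<Rightarrow> nat \<Rightarrow> (nat \<Rightarrow> real) \<Rightarrow> (nat \<Rightarrow> real) \<Rightarrow> (nat \<Rightarrow> nat \<Rightarrow> real)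
    \<Rightarrow> (nat \<Rightarrow> nat \<Rightarrow> real) \<Rightarrow> real" where
  "CE_obj m K q w u z = (\<Sum>k<K. q k * w k * ln (\<Sum>j<m. u k j * z k j))"

definition CE_dom :: "nat \<Rightarrow> nat \<Rightarrow> (nat \<Rightarrow> nat \<Rightarrow> real) \<Rightarrow> (nat \<Rightarrow> nat \<Rightarrow> real) set" where
  "CE_dom m K u = {z. (\<forall>k<K. \<forall>j<m. 0 \<le> z k j) \<and> (\<forall>k<K. 0 < (\<Sum>j<m. u k j * z k j))}"

definition CE_feasible :: "nat \<Rightarrow> nat \<Rightarrow> (nat \<Rightarrow> real) \<Rightarrow> (nat \<Rightarrow> nat \<Rightarrow> real)
    \<Rightarrow> (nat \<Rightarrow> real) \<Rightarrow> (nat \<Rightarrow> nat \<Rightarrow> real) \<Rightarrow> bool" where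
  "CE_feasible m K q u d' z \<longleftrightarrow> z \<in> CE_dom m K u \<and> (\<forall>j<m. (\<Sum>k<K. q k * z k j) \<le> d' j)"

definition CE_optimal :: "nat \<Rightarrow> nat \<Rightarrow> (nat \<Rightarrow> real) \<Rightarrow> (nat \<Rightarrow> real) \<Rightarrow> (nat \<Rightarrow> nat \<Rightarrow> real)
    \<Rightarrow> (nat \<Rightarrow> real) \<Rightarrow> (nat \<Rightarrow> nat \<Rightarrow> real) \<Rightarrow> bool" where
  "CE_optimal m K q w u d' z \<longleftrightarrow> CE_feasible m K q u d' z \<and>
     (\<forall>z'. CE_feasible m K q u d' z' \<longrightarrow> CE_obj m K q w u z' \<le> CE_obj m K q w u z)"

definition CE_dual_fun :: "nat \<Rightarrow> nat \<Rightarrow> (nat \<Rightarrow> real) \<Rightarrow> (nat \<Rightarrow> real) \<Rightarrow> (nat \<Rightarrow> nat \<Rightarrow> real)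
    \<Rightarrow> (nat \<Rightarrow> real) \<Rightarrow> (nat \<Rightarrow> real) \<Rightarrow> ereal" where
  "CE_dual_fun m K q w u d' p = (SUP z \<in> CE_dom m K u.
      ereal (CE_obj m K q w u z - (\<Sum>j<m. p j * ((\<Sum>k<K. q k * z k j) - d' j))))"

definition CE_dual_optimal :: "nat \<Rightarrow> nat \<Rightarrow> (nat \<Rightarrow> real) \<Rightarrow> (nat \<Rightarrow> real) \<Rightarrow> (nat \<Rightarrow> nat \<Rightarrow> real)
    \<Rightarrow> (nat \<Rightarrow> real) \<Rightarrow> (nat \<Rightarrow> real) \<Rightarrow> bool" where
  "CE_dual_optimal m K q w u d' p \<longleftrightarrow> (\<forall>j<m. 0 \<le> p j) \<and>
     CE_dual_fun m K q w u d' p = (INF p' \<in> {p'. \<forall>j<m. 0 \<le> p' j}. CE_dual_fun m K q w u d' p')"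

text \<open>The adaptive policy.  sol d' is the chosen optimal solution of CE(d');
ks t is the type of user t.  The state before user t is (remaining capacity c_t,
flag = "all of d_0,...,d_{t-1} were in the box").\<close>

definition pol_d :: "nat \<Rightarrow> nat \<Rightarrow> (nat \<Rightarrow> real) \<Rightarrow> nat \<Rightarrow> (nat \<Rightarrow> real)" where
  "pol_d m n c t = (\<lambda>j. c j / real (n - t))"

fun pol_state :: "nat \<Rightarrow> (nat \<Rightarrow> real) \<Rightarrow> (nat \<Rightarrow> real) \<Rightarrow> ((nat \<Rightarrow> real) \<Rightarrow> nat \<Rightarrow> nat \<Rightarrow> real)
    \<Rightarrow> nat \<Rightarrow> (nat \<Rightarrow> nat) \<Rightarrow> nat \<Rightarrow> (nat \<Rightarrow> real) \<times> bool" where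
  "pol_state m d Delta sol n ks 0 = ((\<lambda>j. real n * d j), True)"
| "pol_state m d Delta sol n ks (Suc t) =
     (let (c, ok) = pol_state m d Delta sol n ks t;
          ok' = (ok \<and> in_box m d Delta (pol_d m n c t));
          d' = (if ok' then pol_d m n c t else d)
      in ((\<lambda>j. c j - sol d' (ks t) j), ok'))"

definition pol_used_d :: "nat \<Rightarrow> (nat \<Rightarrow> real) \<Rightarrow> (nat \<Rightarrow> real) \<Rightarrow> ((nat \<Rightarrow> real) \<Rightarrow> nat \<Rightarrow> nat \<Rightarrow> real)
    \<Rightarrow> nat \<Rightarrow> (nat \<Rightarrow> nat) \<Rightarrow> nat \<Rightarrow> (nat \<Rightarrow> real)" where
  "pol_used_d m d Delta sol n ks t =
     (let (c, ok) = pol_state m d Delta sol n ks t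
      in if ok \<and> in_box m d Delta (pol_d m n c t) then pol_d m n c t else d)"

definition pol_alloc :: "nat \<Rightarrow> (nat \<Rightarrow> real) \<Rightarrow> (nat \<Rightarrow> real) \<Rightarrow> ((nat \<Rightarrow> real) \<Rightarrow> nat \<Rightarrow> nat \<Rightarrow> real)
    \<Rightarrow> nat \<Rightarrow> (nat \<Rightarrow> nat) \<Rightarrow> nat \<Rightarrow> (nat \<Rightarrow> real)" where
  "pol_alloc m d Delta sol n ks t = sol (pol_used_d m d Delta sol n ks t) (ks t)"

definition offline_opt :: "nat \<Rightarrow> (nat \<Rightarrow> real) \<Rightarrow> (nat \<Rightarrow> nat \<Rightarrow> real) \<Rightarrow> (nat \<Rightarrow> real)
    \<Rightarrow> nat \<Rightarrow> (nat \<Rightarrow> nat) \<Rightarrow> real" where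
  "offline_opt m w u d n ks = Sup {(\<Sum>t<n. w (ks t) * ln (\<Sum>j<m. u (ks t) j * x t j)) | x.
      (\<forall>t<n. \<forall>j<m. 0 \<le> x t j) \<and> (\<forall>j<m. (\<Sum>t<n. x t j) \<le> real n * d j) \<and>
      (\<forall>t<n. 0 < (\<Sum>j<m. u (ks t) j * x t j))}"

definition online_util :: "nat \<Rightarrow> (nat \<Rightarrow> real) \<Rightarrow> (nat \<Rightarrow> nat \<Rightarrow> real) \<Rightarrow> (nat \<Rightarrow> real) \<Rightarrow> (nat \<Rightarrow> real)
    \<Rightarrow> ((nat \<Rightarrow> real) \<Rightarrow> nat \<Rightarrow> nat \<Rightarrow> real) \<Rightarrow> nat \<Rightarrow> (nat \<Rightarrow> nat) \<Rightarrow> real" where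
  "online_util m w u d Delta sol n ks =
     (\<Sum>t<n. w (ks t) * ln (\<Sum>j<m. u (ks t) j * pol_alloc m d Delta sol n ks t j))"

definition violation :: "nat \<Rightarrow> (nat \<Rightarrow> real) \<Rightarrow> (nat \<Rightarrow> real)
    \<Rightarrow> ((nat \<Rightarrow> real) \<Rightarrow> nat \<Rightarrow> nat \<Rightarrow> real) \<Rightarrow> nat \<Rightarrow> (nat \<Rightarrow> nat) \<Rightarrow> real" where
  "violation m d Delta sol n ks =
     sqrt (\<Sum>j<m. (max 0 ((\<Sum>t<n. pol_alloc m d Delta sol n ks t j) - real n * d j))\<^sup>2)"

text \<open>Expectation over i.i.d. types: finite sum over all type sequences of length n.\<close>

definition expect_seq :: "nat \<Rightarrow> (nat \<Rightarrow> real) \<Rightarrow> nat \<Rightarrow> ((nat \<Rightarrow> nat) \<Rightarrow> real) \<Rightarrow> real" where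
  "expect_seq K q n f = (\<Sum>ks \<in> PiE {..<n} (\<lambda>_. {..<K}). (\<Prod>t<n. q (ks t)) * f ks)"

definition regret where
  "regret m K q w u d Delta sol n =
     expect_seq K q n (\<lambda>ks. offline_opt m w u d n ks - online_util m w u d Delta sol n ks)"

definition exp_violation where
  "exp_violation m K q d Delta sol n = expect_seq K q n (violation m d Delta sol n)"

end

theory Submission
  imports Defs
begin


lemma split_sum_PiE:
  fixes G :: "(nat \<Rightarrow> nat) \<Rightarrow> real"
  assumes "t < n"
  shows "(\<Sum>ks\<in>PiE {..<n} (\<lambda>_. {..<K}). G ks) =
    (\<Sum>h\<in>PiE ({..<n}-{t}) (\<lambda>_. {..<K}). \<Sum>y<K. G (h(t:=y)))"
proof -
  let ?S = "{..<n}-{t}"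
  have ins: "{..<n} = insert t ?S" using assms by auto
  have "(\<Sum>ks\<in>PiE (insert t ?S) (\<lambda>_. {..<K}). G ks) =
     (\<Sum>(y,h)\<in>{..<K} \<times> PiE ?S (\<lambda>_. {..<K}). G (h(t:=y)))"
    by (intro sum.reindex_bij_witness[of _ "\<lambda>(y,g). g(t := y)" "\<lambda>g. (g t, g(t := undefined))"])
       (auto simp: PiE_def extensional_def)
  also have "\<dots> = (\<Sum>y<K. \<Sum>h\<in>PiE ?S (\<lambda>_. {..<K}). G (h(t:=y)))"
    by (subst sum.cartesian_product) auto
  also have "\<dots> = (\<Sum>h\<in>PiE ?S (\<lambda>_. {..<K}). \<Sum>y<K. G (h(t:=y)))"
    by (rule sum.swap)
  finally show ?thesis using ins by simp
qed

lemma int_out: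
  assumes "t < n" "(\<Sum>k<K. q k) = 1"
  shows "expect_seq K q n F = expect_seq K q n (\<lambda>ks. \<Sum>k<K. q k * F (ks(t:=k)))"
proof -
  let ?S = "{..<n}-{t}"
  let ?P = "\<lambda>h. \<Prod>s\<in>?S. q (h s)"
  have ins: "{..<n} = insert t ?S" using assms by auto
  have pr: "(\<Prod>s<n. q ((h(t:=y)) s)) = q y * ?P h" for h y
  proof -
    have "(\<Prod>s<n. q ((h(t:=y)) s)) = (\<Prod>s\<in>insert t ?S. q ((h(t:=y)) s))" using ins by simp
    also have "\<dots> = q y * (\<Prod>s\<in>?S. q ((h(t:=y)) s))" by (subst prod.insert) auto
    also have "(\<Prod>s\<in>?S. q ((h(t:=y)) s)) = ?P h" by (intro prod.cong) auto
    finally show ?thesis .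
  qed
  have "expect_seq K q n F = (\<Sum>h\<in>PiE ?S (\<lambda>_. {..<K}). \<Sum>y<K. q y * ?P h * F (h(t:=y)))"
    unfolding expect_seq_def by (subst split_sum_PiE[OF assms(1)]) (simp only: pr)
  also have "\<dots> = (\<Sum>h\<in>PiE ?S (\<lambda>_. {..<K}). \<Sum>y<K. q y * ?P h * (\<Sum>k<K. q k * F (h(t:=k))))"
  proof (rule sum.cong[OF refl])
    fix h
    have "(\<Sum>y<K. q y * ?P h * (\<Sum>k<K. q k * F (h(t:=k)))) = (\<Sum>y<K. q y) * (?P h * (\<Sum>k<K. q k * F (h(t:=k))))"
      by (simp add: sum_distrib_right mult_ac)
    also have "\<dots> = (\<Sum>k<K. q k * ?P h * F (h(t:=k)))" using assms(2) by (simp add: sum_distrib_left mult_ac)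
    finally show "(\<Sum>y<K. q y * ?P h * F (h(t:=y))) = (\<Sum>y<K. q y * ?P h * (\<Sum>k<K. q k * F (h(t:=k))))" by simp
  qed
  also have "\<dots> = expect_seq K q n (\<lambda>ks. \<Sum>k<K. q k * F (ks(t:=k)))"
    unfolding expect_seq_def by (subst split_sum_PiE[OF assms(1)]) (simp only: pr fun_upd_upd)
  finally show ?thesis .
qed

lemma E_one:
  assumes "(\<Sum>k<K. q k) = 1"
  shows "expect_seq K q n (\<lambda>_. c) = c"
proof -
  have "(\<Sum>ks\<in>PiE {..<n} (\<lambda>_. {..<K}). \<Prod>t<n. q (ks t)) = (\<Prod>t<n. \<Sum>k<K. q k)"
    by (subst prod_sum_PiE) auto
  then show ?thesis using assms unfolding expect_seq_def by (simp add: sum_distrib_right[symmetric])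
qed




locale mk =
  fixes m K :: nat and q w :: "nat \<Rightarrow> real" and u :: "nat \<Rightarrow> nat \<Rightarrow> real"
    and d Delta :: "nat \<Rightarrow> real" and sol :: "(nat \<Rightarrow> real) \<Rightarrow> nat \<Rightarrow> nat \<Rightarrow> real"
  assumes q_pos: "\<forall>k<K. 0 < q k"
    and q_sum: "(\<Sum>k<K. q k) = 1"
    and w_pos: "\<forall>k<K. 0 < w k"
    and u_nonneg: "\<forall>k<K. \<forall>j<m. 0 \<le> u k j"
    and u_good: "\<forall>j<m. \<exists>k<K. 0 < u k j"
    and d_pos: "\<forall>j<m. 0 < d j"
    and Delta: "\<forall>j<m. 0 < Delta j \<and> Delta j < d j"
    and sol_opt: "\<forall>d'. in_box m d Delta d' \<longrightarrow> CE_optimal m K q w u d' (sol d')"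
begin

abbreviation "inb \<equiv> in_box m d Delta"
definition "qm = Min (insert 1 (q ` {..<K}))"
definition "Bd j = (d j + Delta j) / qm"
definition "v d' k = (\<Sum>j<m. u k j * sol d' k j)"

lemma qm_pos: "0 < qm"
  unfolding qm_def using q_pos by (subst Min_gr_iff) auto

lemma qm_le: "k < K \<Longrightarrow> qm \<le> q k"
  unfolding qm_def by (rule Min_le) auto

lemma qm_le1: "qm \<le> 1"
  unfolding qm_def by (rule Min_le) auto

lemma inb_d: "inb d"
  unfolding in_box_def using Delta by auto

lemma boxD: "inb d' \<Longrightarrow> j < m \<Longrightarrow> d j - Delta j \<le> d' j \<and> d' j \<le> d j + Delta j"
  unfolding in_box_def by auto

lemma box_pos: "inb d' \<Longrightarrow> j < m \<Longrightarrow> 0 < d' j"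
  using boxD[of d' j] Delta by force

lemma sol_feas: "inb d' \<Longrightarrow> CE_feasible m K q u d' (sol d')"
  using sol_opt unfolding CE_optimal_def by auto

lemma sol_best: "inb d' \<Longrightarrow> CE_feasible m K q u d' z \<Longrightarrow> CE_obj m K q w u z \<le> CE_obj m K q w u (sol d')"
  using sol_opt unfolding CE_optimal_def by auto

lemma sol_nonneg: "inb d' \<Longrightarrow> k < K \<Longrightarrow> j < m \<Longrightarrow> 0 \<le> sol d' k j"
  using sol_feas[of d'] unfolding CE_feasible_def CE_dom_def by auto

lemma v_pos: "inb d' \<Longrightarrow> k < K \<Longrightarrow> 0 < v d' k"
  using sol_feas[of d'] unfolding CE_feasible_def CE_dom_def v_def by auto

lemma sol_cap: "inb d' \<Longrightarrow> j < m \<Longrightarrow> (\<Sum>k<K. q k * sol d' k j) \<le> d' j"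
  using sol_feas[of d'] unfolding CE_feasible_def by auto

lemma sol_le_B: assumes "inb d'" "k < K" "j < m" shows "sol d' k j \<le> Bd j"
proof -
  have "q k * sol d' k j \<le> (\<Sum>k<K. q k * sol d' k j)"
    using assms q_pos sol_nonneg[OF assms(1) _ assms(3)]
    by (intro member_le_sum) auto
  also have "\<dots> \<le> d j + Delta j" using sol_cap[OF assms(1,3)] boxD[OF assms(1,3)] by linarith
  finally have 1: "q k * sol d' k j \<le> d j + Delta j" .
  have "qm * sol d' k j \<le> q k * sol d' k j"
    using qm_le[OF assms(2)] sol_nonneg[OF assms] by (intro mult_right_mono) auto
  with 1 have "qm * sol d' k j \<le> d j + Delta j" by linarith
  then show ?thesis unfolding Bd_def using qm_pos by (simp add: field_simps)
qed

lemma d'_le_B: assumes "inb d'" "j < m" shows "d' j \<le> Bd j"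
proof -
  have "d' j \<le> d j + Delta j" using boxD[OF assms] by auto
  also have "\<dots> \<le> (d j + Delta j) / qm"
  proof -
    have "(d j + Delta j) * qm \<le> d j + Delta j"
      using qm_pos qm_le1 Delta d_pos assms(2) by (intro mult_left_le) auto
    then show ?thesis using qm_pos by (simp add: le_divide_eq)
  qed
  finally show ?thesis unfolding Bd_def .
qed

lemma B_pos: "j < m \<Longrightarrow> 0 < Bd j"
  unfolding Bd_def using qm_pos Delta d_pos by auto

lemma diff_le_B: assumes "inb d'" "k < K" "j < m" shows "\<bar>d' j - sol d' k j\<bar> \<le> Bd j"
  using sol_le_B[OF assms] d'_le_B[OF assms(1,3)] box_pos[OF assms(1,3)] sol_nonneg[OF assms] by auto

lemma tight: assumes bx: "inb d'" and j: "j < m" shows "(\<Sum>k<K. q k * sol d' k j) = d' j"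
proof (rule ccontr)
  let ?S = "\<Sum>k<K. q k * sol d' k j"
  assume "?S \<noteq> d' j"
  with sol_cap[OF bx j] have lt: "?S < d' j" by auto
  obtain k0 where k0: "k0 < K" "0 < u k0 j" using u_good j by auto
  define e where "e = (d' j - ?S) / q k0"
  have qk0: "0 < q k0" using q_pos k0 by auto
  have e: "0 < e" unfolding e_def using lt qk0 by auto
  have ue: "0 < u k0 j * e" using e k0 by auto
  define z where "z = (\<lambda>k i. sol d' k i + (if k = k0 \<and> i = j then e else 0))"
  have vz: "(\<Sum>i<m. u k i * z k i) = v d' k + (if k = k0 then u k0 j * e else 0)" for k
  proof -
    have "(\<Sum>i<m. u k i * z k i) = (\<Sum>i<m. u k i * sol d' k i) + (\<Sum>i<m. u k i * (if k = k0 \<and> i = j then e else 0))"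
      unfolding z_def by (simp add: distrib_left sum.distrib)
    also have "(\<Sum>i<m. u k i * (if k = k0 \<and> i = j then e else 0)) = (if k = k0 then u k0 j * e else 0)"
      using j by (cases "k = k0") (auto simp: if_distrib cong: if_cong)
    finally show ?thesis unfolding v_def .
  qed
  have feas: "CE_feasible m K q u d' z"
    unfolding CE_feasible_def CE_dom_def
  proof (intro conjI allI impI CollectI)
    fix k i assume "k < K" "i < m"
    then show "0 \<le> z k i" unfolding z_def using sol_nonneg[OF bx] e by auto
  next
    fix k assume k: "k < K"
    show "0 < (\<Sum>i<m. u k i * z k i)" unfolding vz using v_pos[OF bx k] ue by auto
  next
    fix i assume i: "i < m"
    have "(\<Sum>k<K. q k * z k i) = (\<Sum>k<K. q k * sol d' k i) + (\<Sum>k<K. q k * (if k = k0 \<and> i = j then e else 0))"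
      unfolding z_def by (simp add: distrib_left sum.distrib)
    also have "(\<Sum>k<K. q k * (if k = k0 \<and> i = j then e else 0)) = (if i = j then q k0 * e else 0)"
      using k0 by (cases "i = j") (auto simp: if_distrib cong: if_cong)
    finally have "(\<Sum>k<K. q k * z k i) = (\<Sum>k<K. q k * sol d' k i) + (if i = j then q k0 * e else 0)" .
    moreover have "q k0 * e = d' j - ?S" unfolding e_def using qk0 by simp
    ultimately show "(\<Sum>k<K. q k * z k i) \<le> d' i" using sol_cap[OF bx i] by auto
  qed
  have "CE_obj m K q w u (sol d') < CE_obj m K q w u z"
    unfolding CE_obj_def
  proof (rule sum_strict_mono_ex1)
    show "\<forall>k\<in>{..<K}. q k * w k * ln (\<Sum>j<m. u k j * sol d' k j) \<le> q k * w k * ln (\<Sum>j<m. u k j * z k j)"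
    proof
      fix k assume k: "k \<in> {..<K}"
      have "ln (v d' k) \<le> ln (v d' k + (if k = k0 then u k0 j * e else 0))"
        using v_pos[OF bx, of k] v_pos[OF bx k0(1)] k k0 ue by auto
      then show "q k * w k * ln (\<Sum>j<m. u k j * sol d' k j) \<le> q k * w k * ln (\<Sum>j<m. u k j * z k j)"
        unfolding vz using q_pos w_pos k by (auto simp: v_def intro!: mult_left_mono)
    qed
    have "ln (v d' k0) < ln (v d' k0 + u k0 j * e)"
      using v_pos[OF bx k0(1)] ue by auto
    then show "\<exists>k\<in>{..<K}. q k * w k * ln (\<Sum>j<m. u k j * sol d' k j) < q k * w k * ln (\<Sum>j<m. u k j * z k j)"
      using k0 qk0 w_pos unfolding vz by (intro bexI[of _ k0]) (auto simp: v_def)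
  qed auto
  with sol_best[OF bx feas] show False by simp
qed

lemma ln_ge_one_minus_inv: "0 < (x::real) \<Longrightarrow> 1 - 1/x \<le> ln x"
  using ln_le_minus_one[of "1/x"] by (simp add: ln_div)

lemma frac_lt: "0 < (D::real) \<Longrightarrow> 0 \<le> X \<Longrightarrow> D / (2*X+1) * X < D"
proof -
  assume a: "0 < D" "0 \<le> X"
  have "X / (2*X+1) < 1" using a by (simp add: divide_less_eq)
  then have "D * (X / (2*X+1)) < D * 1" using a by (intro mult_strict_left_mono) auto
  then show ?thesis by (simp add: field_simps)
qed

lemma kkt_arith:
  fixes a b W W' e X :: real
  assumes "0 \<le> a" "0 \<le> b" "0 < W" "0 < W'" "W * a < W' * b" "0 < e"
    "e \<le> 1 / (2*a+2)" "X = 2*W*a^2 + W'*b^2" "e \<le> (W'*b - W*a) / (2*X+1)"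
  shows "0 < W * ln (1 - a*e) + W' * ln (1 + b*e)"
proof -
  have ae: "a * e \<le> 1/2"
  proof -
    have "a * e \<le> a * (1/(2*a+2))" using assms by (intro mult_left_mono) auto
    also have "\<dots> \<le> 1/2" using assms by (simp add: field_simps)
    finally show ?thesis .
  qed
  have ae0: "0 \<le> a * e" using assms by auto
  have be0: "0 \<le> b * e" using assms by auto
  have l1: "ln (1 - a*e) \<ge> - ((a*e) * (1 + 2*(a*e)))"
  proof -
    have "1 - 1/(1 - a*e) \<le> ln (1 - a*e)" using ae by (intro ln_ge_one_minus_inv) auto
    moreover have "- ((a*e) * (1 + 2*(a*e))) \<le> 1 - 1/(1 - a*e)"
    proof -
      have "(1 + 2*(a*e)) * (1 - a*e) = 1 + (a*e) * (1 - 2*(a*e))" by (simp add: algebra_simps)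
      moreover have "0 \<le> (a*e) * (1 - 2*(a*e))" using ae ae0 by (intro mult_nonneg_nonneg[of "a*e"]) auto
      ultimately have "(1 + 2*(a*e)) * (1 - a*e) \<ge> 1" by linarith
      then have "1/(1 - a*e) \<le> 1 + 2*(a*e)" using ae by (simp add: divide_le_eq mult.commute)
      then have "(a*e) * (1/(1 - a*e)) \<le> (a*e) * (1 + 2*(a*e))" using ae0 by (rule mult_left_mono)
      moreover have "1 - 1/(1 - a*e) = - ((a*e) * (1/(1 - a*e)))" using ae by (simp add: field_simps)
      ultimately show ?thesis by linarith
    qed
    ultimately show ?thesis by linarith
  qed
  have l2: "ln (1 + b*e) \<ge> (b*e) * (1 - b*e)"
  proof -
    have "1 - 1/(1 + b*e) \<le> ln (1 + b*e)" using be0 by (intro ln_ge_one_minus_inv) auto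
    moreover have "(b*e) * (1 - b*e) \<le> 1 - 1/(1 + b*e)"
    proof -
      have "1 - 1/(1 + b*e) = (b*e)/(1+b*e)" using be0 by (simp add: field_simps)
      moreover have "(b*e) * (1 - b*e) * (1 + b*e) \<le> b*e"
      proof -
        have "(b*e) * (1 - b*e) * (1 + b*e) = b*e - (b*e)*((b*e)*(b*e))" by (simp add: algebra_simps)
        moreover have "0 \<le> (b*e)*((b*e)*(b*e))" using be0 by auto
        ultimately show ?thesis by linarith
      qed
      ultimately show ?thesis using be0 by (simp add: le_divide_eq)
    qed
    ultimately show ?thesis by linarith
  qed
  have X0: "0 \<le> X" using assms by auto
  have eX: "e * X < W'*b - W*a"
  proof -
    have "e * X \<le> (W'*b - W*a) / (2*X+1) * X" using assms X0 by (intro mult_right_mono) auto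
    also have "\<dots> < W'*b - W*a" using X0 assms by (intro frac_lt) auto
    finally show ?thesis .
  qed
  have "W * ln (1 - a*e) + W' * ln (1 + b*e) \<ge> W * (- ((a*e) * (1 + 2*(a*e)))) + W' * ((b*e) * (1 - b*e))"
    using l1 l2 assms by (intro add_mono mult_left_mono) auto
  moreover have "W * (- ((a*e) * (1 + 2*(a*e)))) + W' * ((b*e) * (1 - b*e)) = e * ((W'*b - W*a) - e * X)"
    using assms by (simp add: algebra_simps power2_eq_square)
  moreover have "0 < e * ((W'*b - W*a) - e * X)" using eX assms by auto
  ultimately show ?thesis by linarith
qed

lemma kkt:
  assumes bx: "inb d'" and j: "j < m" and k: "k < K" and k': "k' < K" and pos: "0 < sol d' k j"
  shows "w k' * u k' j / v d' k' \<le> w k * u k j / v d' k"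
proof (rule ccontr)
  assume "\<not> ?thesis"
  then have lt: "w k * u k j / v d' k < w k' * u k' j / v d' k'" by simp
  then have kk: "k \<noteq> k'" by auto
  define V where "V = v d' k"
  define V' where "V' = v d' k'"
  define W where "W = q k * w k"
  define W' where "W' = q k' * w k'"
  define a where "a = u k j / (q k * V)"
  define b where "b = u k' j / (q k' * V')"
  define X where "X = 2*W*a^2 + W'*b^2"
  have V: "0 < V" unfolding V_def using v_pos[OF bx k] .
  have V': "0 < V'" unfolding V'_def using v_pos[OF bx k'] .
  have qk: "0 < q k" and qk': "0 < q k'" using q_pos k k' by auto
  have W: "0 < W" and W': "0 < W'" unfolding W_def W'_def using q_pos w_pos k k' by auto
  have a: "0 \<le> a" unfolding a_def using u_nonneg k j V qk by auto
  have b: "0 \<le> b" unfolding b_def using u_nonneg k' j V' qk' by auto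
  have Wa: "W * a = w k * u k j / V" unfolding W_def a_def using qk by (simp add: field_simps)
  have Wb: "W' * b = w k' * u k' j / V'" unfolding W'_def b_def using qk' by (simp add: field_simps)
  have WaWb: "W * a < W' * b" using lt unfolding Wa Wb V_def V'_def .
  have X0: "0 \<le> X" unfolding X_def using W W' by auto
  define e where "e = min (q k * sol d' k j) (min (1/(2*a+2)) ((W'*b - W*a)/(2*X+1)))"
  have e: "0 < e" unfolding e_def using qk pos a X0 WaWb by auto
  have e1: "e \<le> q k * sol d' k j" and e2: "e \<le> 1/(2*a+2)" and e3: "e \<le> (W'*b - W*a)/(2*X+1)"
    unfolding e_def by auto
  have pos_ln: "0 < W * ln (1 - a*e) + W' * ln (1 + b*e)"
    using kkt_arith[OF a b W W' WaWb e e2 X_def e3] .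
  have ae: "a * e < 1"
  proof -
    have "a * e \<le> a * (1/(2*a+2))" using e2 a by (intro mult_left_mono) auto
    also have "\<dots> < 1" using a by (simp add: field_simps)
    finally show ?thesis .
  qed
  define z where "z = (\<lambda>k'' i. sol d' k'' i + (if i = j then (if k'' = k' then e / q k' else 0) - (if k'' = k then e / q k else 0) else 0))"
  have vz: "(\<Sum>i<m. u k'' i * z k'' i) = v d' k'' + ((if k'' = k' then u k' j * e / q k' else 0) - (if k'' = k then u k j * e / q k else 0))" for k''
  proof -
    have "(\<Sum>i<m. u k'' i * z k'' i) = (\<Sum>i<m. u k'' i * sol d' k'' i) +
       (\<Sum>i<m. u k'' i * (if i = j then (if k'' = k' then e / q k' else 0) - (if k'' = k then e / q k else 0) else 0))"
      unfolding z_def by (simp add: distrib_left sum.distrib)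
    also have "(\<Sum>i<m. u k'' i * (if i = j then (if k'' = k' then e / q k' else 0) - (if k'' = k then e / q k else 0) else 0))
       = u k'' j * ((if k'' = k' then e / q k' else 0) - (if k'' = k then e / q k else 0))"
      using j by (simp add: if_distrib cong: if_cong)
    finally show ?thesis unfolding v_def by (auto simp: algebra_simps)
  qed
  have vzk: "(\<Sum>i<m. u k i * z k i) = V * (1 - a*e)"
    unfolding vz V_def a_def using kk qk V by (simp add: V_def field_simps)
  have vzk': "(\<Sum>i<m. u k' i * z k' i) = V' * (1 + b*e)"
    unfolding vz V'_def b_def using kk qk' V' by (simp add: V'_def field_simps)
  have vzo: "k'' \<noteq> k \<Longrightarrow> k'' \<noteq> k' \<Longrightarrow> (\<Sum>i<m. u k'' i * z k'' i) = v d' k''" for k''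
    unfolding vz by simp
  have feas: "CE_feasible m K q u d' z"
    unfolding CE_feasible_def CE_dom_def
  proof (intro conjI allI impI CollectI)
    fix k'' i assume k'': "k'' < K" and i: "i < m"
    have "e / q k \<le> sol d' k j" using e1 qk by (simp add: divide_le_eq mult.commute)
    then show "0 \<le> z k'' i" unfolding z_def using sol_nonneg[OF bx k'' i] e qk qk' kk
      by (auto simp: divide_nonneg_pos)
  next
    fix k'' assume k'': "k'' < K"
    show "0 < (\<Sum>i<m. u k'' i * z k'' i)"
    proof (cases "k'' = k")
      case True then show ?thesis using vzk V ae by auto
    next
      case False
      show ?thesis
      proof (cases "k'' = k'")
        case True then show ?thesis using vzk' V' b e by (auto intro!: mult_pos_pos add_pos_nonneg)
      next
        case False2: False
        then show ?thesis using vzo[OF False False2] v_pos[OF bx k''] by simp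
      qed
    qed
  next
    fix i assume i: "i < m"
    have "(\<Sum>k''<K. q k'' * z k'' i) = (\<Sum>k''<K. q k'' * sol d' k'' i) +
       (\<Sum>k''<K. q k'' * (if i = j then (if k'' = k' then e / q k' else 0) - (if k'' = k then e / q k else 0) else 0))"
      unfolding z_def by (simp add: distrib_left sum.distrib)
    also have "(\<Sum>k''<K. q k'' * (if i = j then (if k'' = k' then e / q k' else 0) - (if k'' = k then e / q k else 0) else 0)) = 0"
    proof (cases "i = j")
      case True
      have "(\<Sum>k''<K. q k'' * ((if k'' = k' then e / q k' else 0) - (if k'' = k then e / q k else 0)))
         = (\<Sum>k''<K. (if k'' = k' then e else 0)) - (\<Sum>k''<K. (if k'' = k then e else 0))"
      proof -
        have "q k'' * ((if k'' = k' then e / q k' else 0) - (if k'' = k then e / q k else 0)) =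
          (if k'' = k' then e else 0) - (if k'' = k then e else 0)" for k''
          using qk qk' by (cases "k'' = k"; cases "k'' = k'") auto
        then show ?thesis by (simp add: sum_subtractf)
      qed
      also have "\<dots> = 0" using k k' by simp
      finally show ?thesis using True by simp
    qed simp
    finally show "(\<Sum>k''<K. q k'' * z k'' i) \<le> d' i" using sol_cap[OF bx i] by simp
  qed
  have "CE_obj m K q w u z - CE_obj m K q w u (sol d') =
      (\<Sum>k''<K. q k'' * w k'' * (ln (\<Sum>i<m. u k'' i * z k'' i) - ln (v d' k'')))"
    unfolding CE_obj_def v_def by (simp add: sum_subtractf right_diff_distrib)
  also have "\<dots> = (\<Sum>k''<K. (if k'' = k then W * ln (1 - a*e) else 0) + (if k'' = k' then W' * ln (1 + b*e) else 0))"
  proof (rule sum.cong[OF refl])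
    fix k'' assume "k'' \<in> {..<K}"
    show "q k'' * w k'' * (ln (\<Sum>i<m. u k'' i * z k'' i) - ln (v d' k'')) =
       (if k'' = k then W * ln (1 - a*e) else 0) + (if k'' = k' then W' * ln (1 + b*e) else 0)"
    proof (cases "k'' = k")
      case True then show ?thesis using kk vzk V ae by (simp add: W_def V_def ln_mult)
    next
      case False
      show ?thesis
      proof (cases "k'' = k'")
        case True
        have "0 < 1 + b*e" using b e by (auto intro: add_pos_nonneg)
        then show ?thesis using True kk vzk' V' by (simp add: W'_def V'_def ln_mult)
      next
        case False2: False
        then show ?thesis using False vzo by simp
      qed
    qed
  qed
  also have "\<dots> = W * ln (1 - a*e) + W' * ln (1 + b*e)"
    using k k' by (simp add: sum.distrib)
  finally have "CE_obj m K q w u (sol d') < CE_obj m K q w u z" using pos_ln by simp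
  with sol_best[OF bx feas] show False by simp
qed

lemma ex_pos: assumes j: "j < m" shows "\<exists>k<K. 0 < sol d k j"
proof (rule ccontr)
  assume "\<not> ?thesis"
  then have "\<forall>k<K. sol d k j = 0" using sol_nonneg[OF inb_d _ j] by force
  then have "(\<Sum>k<K. q k * sol d k j) = 0" by simp
  with tight[OF inb_d j] d_pos j show False by force
qed

definition "kj j = (SOME k. k < K \<and> 0 < sol d k j)"
definition "pr j = w (kj j) * u (kj j) j / v d (kj j)"

lemma kj: "j < m \<Longrightarrow> kj j < K \<and> 0 < sol d (kj j) j"
  unfolding kj_def using ex_pos by (rule someI_ex) auto

lemma pr_ge: "j < m \<Longrightarrow> k < K \<Longrightarrow> w k * u k j / v d k \<le> pr j"
  unfolding pr_def using kj kkt[OF inb_d] by blast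

lemma pr_eq: "j < m \<Longrightarrow> k < K \<Longrightarrow> 0 < sol d k j \<Longrightarrow> pr j = w k * u k j / v d k"
  using pr_ge kkt[OF inb_d, of j k "kj j"] kj unfolding pr_def by force

lemma pr_nonneg: "j < m \<Longrightarrow> 0 \<le> pr j"
  unfolding pr_def using kj w_pos u_nonneg v_pos[OF inb_d] by (meson divide_nonneg_pos mult_nonneg_nonneg less_imp_le)

lemma pr_sol: assumes k: "k < K" shows "(\<Sum>j<m. pr j * sol d k j) = w k"
proof -
  have "(\<Sum>j<m. pr j * sol d k j) = (\<Sum>j<m. w k / v d k * (u k j * sol d k j))"
  proof (rule sum.cong[OF refl])
    fix j assume j: "j \<in> {..<m}"
    show "pr j * sol d k j = w k / v d k * (u k j * sol d k j)"
    proof (cases "sol d k j = 0")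
      case False
      then have "0 < sol d k j" using sol_nonneg[OF inb_d k] j by force
      then show ?thesis using pr_eq[OF _ k] j by simp
    qed simp
  qed
  also have "\<dots> = w k / v d k * v d k" unfolding v_def by (simp add: sum_distrib_left)
  also have "\<dots> = w k" using v_pos[OF inb_d k] by simp
  finally show ?thesis .
qed

lemma pr_d: "(\<Sum>j<m. pr j * d j) = (\<Sum>k<K. q k * w k)"
proof -
  have "(\<Sum>j<m. pr j * d j) = (\<Sum>j<m. pr j * (\<Sum>k<K. q k * sol d k j))"
    using tight[OF inb_d] by simp
  also have "\<dots> = (\<Sum>k<K. q k * (\<Sum>j<m. pr j * sol d k j))"
    by (simp add: sum_distrib_left sum_distrib_right sum.swap[of _ "{..<m}"] mult_ac)
  also have "\<dots> = (\<Sum>k<K. q k * w k)" using pr_sol by simp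
  finally show ?thesis .
qed

definition "Bnd n ks = (\<Sum>t<n. w (ks t) * ln (v d (ks t)) - w (ks t)) + real n * (\<Sum>k<K. q k * w k)"

lemma offline_le:
  assumes ks: "ks \<in> PiE {..<n} (\<lambda>_. {..<K})"
  shows "offline_opt m w u d n ks \<le> Bnd n ks"
proof -
  have kst: "t < n \<Longrightarrow> ks t < K" for t using ks by auto
  let ?S = "{(\<Sum>t<n. w (ks t) * ln (\<Sum>j<m. u (ks t) j * x t j)) | x.
      (\<forall>t<n. \<forall>j<m. 0 \<le> x t j) \<and> (\<forall>j<m. (\<Sum>t<n. x t j) \<le> real n * d j) \<and>
      (\<forall>t<n. 0 < (\<Sum>j<m. u (ks t) j * x t j))}"
  have ne: "?S \<noteq> {}"
  proof -
    define x where "x = (\<lambda>t j. qm * sol d (ks t) j)"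
    have "(\<forall>t<n. \<forall>j<m. 0 \<le> x t j) \<and> (\<forall>j<m. (\<Sum>t<n. x t j) \<le> real n * d j) \<and>
      (\<forall>t<n. 0 < (\<Sum>j<m. u (ks t) j * x t j))"
    proof (intro conjI allI impI)
      fix t j assume "t < n" "j < m"
      then show "0 \<le> x t j" unfolding x_def using qm_pos sol_nonneg[OF inb_d kst] by auto
    next
      fix j assume j: "j < m"
      have "x t j \<le> d j" if t: "t < n" for t
      proof -
        have "qm * sol d (ks t) j \<le> q (ks t) * sol d (ks t) j"
          using qm_le[OF kst[OF t]] sol_nonneg[OF inb_d kst[OF t] j] by (intro mult_right_mono) auto
        also have "\<dots> \<le> (\<Sum>k<K. q k * sol d k j)"
          using kst[OF t] q_pos sol_nonneg[OF inb_d _ j] by (intro member_le_sum) auto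
        also have "\<dots> = d j" using tight[OF inb_d j] .
        finally show ?thesis unfolding x_def .
      qed
      then have "(\<Sum>t<n. x t j) \<le> (\<Sum>t<n. d j)" by (intro sum_mono) auto
      then show "(\<Sum>t<n. x t j) \<le> real n * d j" by simp
    next
      fix t assume t: "t < n"
      have "(\<Sum>j<m. u (ks t) j * x t j) = qm * v d (ks t)" unfolding x_def v_def
        by (simp add: sum_distrib_left mult_ac)
      then show "0 < (\<Sum>j<m. u (ks t) j * x t j)" using qm_pos v_pos[OF inb_d kst[OF t]] by simp
    qed
    then show ?thesis by blast
  qed
  have ub: "y \<le> Bnd n ks" if "y \<in> ?S" for y
  proof -
    from that obtain x where y: "y = (\<Sum>t<n. w (ks t) * ln (\<Sum>j<m. u (ks t) j * x t j))"
      and x0: "\<forall>t<n. \<forall>j<m. 0 \<le> x t j" and xc: "\<forall>j<m. (\<Sum>t<n. x t j) \<le> real n * d j"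
      and xp: "\<forall>t<n. 0 < (\<Sum>j<m. u (ks t) j * x t j)" by blast
    have step: "w (ks t) * ln (\<Sum>j<m. u (ks t) j * x t j) \<le> w (ks t) * ln (v d (ks t)) - w (ks t) + (\<Sum>j<m. pr j * x t j)"
      if t: "t < n" for t
    proof -
      let ?k = "ks t"
      let ?y = "\<Sum>j<m. u ?k j * x t j"
      let ?V = "v d ?k"
      have k: "?k < K" using kst t .
      have V: "0 < ?V" using v_pos[OF inb_d k] .
      have y0: "0 < ?y" using xp t by auto
      have "ln ?y - ln ?V = ln (?y / ?V)" using y0 V by (simp add: ln_div)
      also have "\<dots> \<le> ?y / ?V - 1" using y0 V by (intro ln_le_minus_one) auto
      finally have l: "ln ?y \<le> ln ?V + ?y / ?V - 1" by simp
      have w0: "0 < w ?k" using w_pos k by auto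
      have "w ?k * ln ?y \<le> w ?k * (ln ?V + ?y / ?V - 1)" using l w0 by (intro mult_left_mono) auto
      also have "\<dots> = w ?k * ln ?V - w ?k + (\<Sum>j<m. w ?k * u ?k j / ?V * x t j)"
        using V by (simp add: algebra_simps sum_divide_distrib sum_distrib_left)
      also have "(\<Sum>j<m. w ?k * u ?k j / ?V * x t j) \<le> (\<Sum>j<m. pr j * x t j)"
        using pr_ge[OF _ k] x0 t by (intro sum_mono mult_right_mono) auto
      finally show ?thesis by simp
    qed
    have "y \<le> (\<Sum>t<n. w (ks t) * ln (v d (ks t)) - w (ks t) + (\<Sum>j<m. pr j * x t j))"
      unfolding y using step by (intro sum_mono) auto
    also have "\<dots> = (\<Sum>t<n. w (ks t) * ln (v d (ks t)) - w (ks t)) + (\<Sum>j<m. pr j * (\<Sum>t<n. x t j))"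
      by (simp add: sum.distrib sum_distrib_left sum.swap[of _ "{..<m}"])
    also have "(\<Sum>j<m. pr j * (\<Sum>t<n. x t j)) \<le> (\<Sum>j<m. pr j * (real n * d j))"
      using xc pr_nonneg by (intro sum_mono mult_left_mono) auto
    also have "(\<Sum>j<m. pr j * (real n * d j)) = real n * (\<Sum>k<K. q k * w k)"
    proof -
      have "(\<Sum>j<m. pr j * (real n * d j)) = real n * (\<Sum>j<m. pr j * d j)"
        by (simp add: sum_distrib_left mult_ac)
      then show ?thesis using pr_d by simp
    qed
    finally show ?thesis unfolding Bnd_def by simp
  qed
  show ?thesis unfolding offline_opt_def
    by (rule cSup_least[OF ne]) (use ub in blast)
qed

end



abbreviation "Om K n \<equiv> PiE {..<n} (\<lambda>_. {..<K::nat})"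

lemma E_cong: "(\<And>ks. ks \<in> Om K n \<Longrightarrow> f ks = g ks) \<Longrightarrow> expect_seq K q n f = expect_seq K q n g"
  unfolding expect_seq_def by (intro sum.cong) auto

lemma E_mono: "(\<forall>k<K. 0 \<le> q k) \<Longrightarrow> (\<And>ks. ks \<in> Om K n \<Longrightarrow> f ks \<le> g ks) \<Longrightarrow>
    expect_seq K q n f \<le> expect_seq K q n g"
  unfolding expect_seq_def by (intro sum_mono mult_left_mono prod_nonneg) (auto simp: PiE_iff)

lemma E_add: "expect_seq K q n (\<lambda>ks. f ks + g ks) = expect_seq K q n f + expect_seq K q n g"
  unfolding expect_seq_def by (simp add: distrib_left sum.distrib)

lemma E_diff: "expect_seq K q n (\<lambda>ks. f ks - g ks) = expect_seq K q n f - expect_seq K q n g"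
  unfolding expect_seq_def by (simp add: right_diff_distrib sum_subtractf)

lemma E_cmult: "expect_seq K q n (\<lambda>ks. c * f ks) = c * expect_seq K q n f"
  unfolding expect_seq_def by (simp add: sum_distrib_left mult_ac)

lemma E_sum: "expect_seq K q n (\<lambda>ks. \<Sum>i\<in>I. f i ks) = (\<Sum>i\<in>I. expect_seq K q n (f i))"
  unfolding expect_seq_def by (simp add: sum_distrib_left sum.swap[of _ I])

lemma E_zero_mult:
  assumes t: "t < n" and qs: "(\<Sum>k<K. q k) = 1"
    and g: "\<And>ks k. ks \<in> Om K n \<Longrightarrow> k < K \<Longrightarrow> g (ks(t:=k)) = g ks"
    and h: "\<And>ks. ks \<in> Om K n \<Longrightarrow> (\<Sum>k<K. q k * h (ks(t:=k))) = 0"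
  shows "expect_seq K q n (\<lambda>ks. g ks * h ks) = 0"
proof -
  have "expect_seq K q n (\<lambda>ks. g ks * h ks) = expect_seq K q n (\<lambda>ks. \<Sum>k<K. q k * (g (ks(t:=k)) * h (ks(t:=k))))"
    by (rule int_out[OF t qs])
  also have "\<dots> = expect_seq K q n (\<lambda>ks. g ks * (\<Sum>k<K. q k * h (ks(t:=k))))"
    by (rule E_cong) (simp add: g sum_distrib_left mult_ac)
  also have "\<dots> = expect_seq K q n (\<lambda>ks. 0)"
    by (rule E_cong) (simp add: h)
  also have "\<dots> = 0" using E_one[OF qs] by simp
  finally show ?thesis .
qed

lemma E_single:
  assumes t: "t < n" and qs: "(\<Sum>k<K. q k) = 1"
  shows "expect_seq K q n (\<lambda>ks. f (ks t)) = (\<Sum>k<K. q k * f k)"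
proof -
  have "expect_seq K q n (\<lambda>ks. f (ks t)) = expect_seq K q n (\<lambda>ks. \<Sum>k<K. q k * f ((ks(t:=k)) t))"
    by (rule int_out[OF t qs])
  also have "\<dots> = (\<Sum>k<K. q k * f k)" using E_one[OF qs] by simp
  finally show ?thesis .
qed

lemma ar2:
  fixes r C :: real assumes r: "1 \<le> r" and C: "0 \<le> C"
  shows "2*C/(r+1) + C/r^2 \<le> 2*C/r"
proof -
  have rp: "0 < r" "0 < r+1" "0 < r*r" "0 < r*(r+1)" using r by auto
  have "2*C/r - 2*C/(r+1) = 2*C/(r*(r+1))" using rp by (simp add: field_simps)
  moreover have "C/r^2 \<le> 2*C/(r*(r+1))"
  proof -
    have "r+1 \<le> r*2" using r by simp
    then have "C*(r+1) \<le> C*(r*2)" using C by (rule mult_left_mono)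
    then show ?thesis using rp by (simp add: divide_simps power2_eq_square mult_ac)
  qed
  ultimately show ?thesis by linarith
qed

lemma ar4:
  fixes r G :: real assumes r: "1 \<le> r" and G: "0 \<le> G"
  shows "2*G/(r+1)^2 + G/r^3 \<le> 2*G/r^2"
proof -
  have rp: "0 < r" "0 < r+1" "0 < r^2" "0 < (r+1)^2" "0 < r^3" using r by auto
  have "2*G/r^2 - 2*G/(r+1)^2 = 2*G*((r+1)^2 - r^2)/(r^2*(r+1)^2)" using rp by (simp add: field_simps)
  also have "(r+1)^2 - r^2 = 2*r+1" by (simp add: power2_eq_square algebra_simps)
  finally have eq: "2*G/r^2 - 2*G/(r+1)^2 = 2*G*(2*r+1)/(r^2*(r+1)^2)" .
  have "(r+1)^2 \<le> 2*r*(2*r+1)"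
  proof -
    have "(r+1)^2 = r*r + 2*r + 1" "2*r*(2*r+1) = 4*(r*r) + 2*r" by (simp_all add: power2_eq_square algebra_simps)
    moreover have "1 \<le> r*r" using r by (metis less_le_not_le mult_le_cancel_left1 order_trans rp(1))
    ultimately show ?thesis by linarith
  qed
  then have "r^2*(r+1)^2 \<le> r^2*(2*r*(2*r+1))" using rp by (intro mult_left_mono) auto
  also have "r^2*(2*r*(2*r+1)) = r^3*(2*(2*r+1))" by (simp add: power2_eq_square power3_eq_cube algebra_simps)
  finally have "G*(r^2*(r+1)^2) \<le> G*(r^3*(2*(2*r+1)))" using G by (rule mult_left_mono)
  then have "G/r^3 \<le> 2*G*(2*r+1)/(r^2*(r+1)^2)" using rp by (simp add: divide_simps mult_ac)
  with eq show ?thesis by linarith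
qed

lemma poly2: fixes x y c :: real assumes "\<bar>x\<bar> \<le> c"
  shows "(y+x)^2 \<le> y^2 + 2*(y*x) + c^2"
proof -
  have "\<bar>x\<bar>^2 \<le> c^2" using assms by (intro power_mono) auto
  then have "x^2 \<le> c^2" by simp
  then show ?thesis by (simp add: power2_eq_square algebra_simps)
qed

lemma poly4: fixes x y c A :: real assumes x: "\<bar>x\<bar> \<le> c" and y: "\<bar>y\<bar> \<le> A"
  shows "(y+x)^4 \<le> y^4 + 4*(y^3*x) + 6*c^2*y^2 + 4*A*c^3 + c^4"
proof -
  have c0: "0 \<le> c" using x by linarith
  have e: "(y+x)^4 = y^4 + 4*(y^3*x) + 6*(y^2*x^2) + 4*(y*x^3) + x^4"
    by (simp add: power4_eq_xxxx power3_eq_cube power2_eq_square algebra_simps)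
  have "\<bar>x\<bar>^2 \<le> c^2" using x by (intro power_mono) auto
  then have x2: "x^2 \<le> c^2" by simp
  have "x^2*y^2 \<le> c^2*y^2" using x2 by (rule mult_right_mono) simp
  then have 1: "y^2*x^2 \<le> c^2*y^2" by (simp add: mult.commute)
  have "\<bar>x\<bar>^3 \<le> c^3" using x by (intro power_mono) auto
  then have "\<bar>y\<bar> * \<bar>x\<bar>^3 \<le> A * c^3" using y c0 by (intro mult_mono) auto
  moreover have "y*x^3 \<le> \<bar>y\<bar> * \<bar>x\<bar>^3"
  proof -
    have "y*x^3 \<le> \<bar>y*x^3\<bar>" by (rule abs_ge_self)
    also have "\<dots> = \<bar>y\<bar> * \<bar>x\<bar>^3" by (simp add: abs_mult power_abs)
    finally show ?thesis .
  qed
  ultimately have 2: "y*x^3 \<le> A*c^3" by linarith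
  have "(x^2)^2 \<le> (c^2)^2" using x2 by (rule power_mono) simp
  then have 3: "x^4 \<le> c^4" by (simp add: power_mult[symmetric])
  show ?thesis using e 1 2 3 by linarith
qed

lemma mart:
  fixes y :: "nat \<Rightarrow> (nat \<Rightarrow> nat) \<Rightarrow> real" and A B :: real
  assumes qs: "(\<Sum>k<K. q k) = 1" and qn: "\<forall>k<K. 0 \<le> q k" and B0: "0 \<le> B" and A0: "0 \<le> A"
    and y0: "\<And>ks. ks \<in> Om K n \<Longrightarrow> y 0 ks = 0"
    and inc: "\<And>t ks. Suc t < n \<Longrightarrow> ks \<in> Om K n \<Longrightarrow> \<bar>y (Suc t) ks - y t ks\<bar> \<le> B / real (n - Suc t)"
    and mz: "\<And>t ks. Suc t < n \<Longrightarrow> ks \<in> Om K n \<Longrightarrow> (\<Sum>k<K. q k * (y (Suc t) (ks(t:=k)) - y t (ks(t:=k)))) = 0"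
    and ind: "\<And>t ks k. t < n \<Longrightarrow> ks \<in> Om K n \<Longrightarrow> k < K \<Longrightarrow> y t (ks(t:=k)) = y t ks"
    and bd: "\<And>t ks. t < n \<Longrightarrow> ks \<in> Om K n \<Longrightarrow> \<bar>y t ks\<bar> \<le> A"
  shows "t < n \<Longrightarrow> expect_seq K q n (y t) = 0 \<and>
     expect_seq K q n (\<lambda>ks. (y t ks)^2) \<le> 2*B^2/real (n-t) \<and>
     expect_seq K q n (\<lambda>ks. (y t ks)^4) \<le> 2*(12*B^4+4*A*B^3+B^4)/(real (n-t))^2"
proof (induction t)
  case 0
  have "expect_seq K q n (y 0) = expect_seq K q n (\<lambda>_. 0)" by (rule E_cong) (simp add: y0)
  moreover have "expect_seq K q n (\<lambda>ks. (y 0 ks)^2) = expect_seq K q n (\<lambda>_. 0)" by (rule E_cong) (simp add: y0)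
  moreover have "expect_seq K q n (\<lambda>ks. (y 0 ks)^4) = expect_seq K q n (\<lambda>_. 0)" by (rule E_cong) (simp add: y0)
  ultimately show ?case using E_one[OF qs, of n 0] B0 A0 by simp
next
  case (Suc t)
  note st = Suc.prems
  have tn: "t < n" using st by simp
  note IH = Suc.IH[OF tn]
  define r where "r = real (n - Suc t)"
  have r1: "1 \<le> r" unfolding r_def using st by simp
  have rt: "real (n - t) = r + 1" unfolding r_def using st by simp
  have rS: "real (n - Suc t) = r" unfolding r_def ..
  define c where "c = B / r"
  have c0: "0 \<le> c" unfolding c_def using B0 r1 by simp
  define xi where "xi = (\<lambda>ks. y (Suc t) ks - y t ks)"
  have xi_b: "\<bar>xi ks\<bar> \<le> c" if "ks \<in> Om K n" for ks unfolding xi_def c_def using inc[OF st that] rS by simp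
  have ysplit: "y (Suc t) ks = y t ks + xi ks" for ks unfolding xi_def by simp
  have zm: "expect_seq K q n (\<lambda>ks. g ks * xi ks) = 0"
    if gi: "\<And>ks k. ks \<in> Om K n \<Longrightarrow> k < K \<Longrightarrow> g (ks(t:=k)) = g ks" for g
  proof (rule E_zero_mult[OF tn qs])
    show "g (ks(t:=k)) = g ks" if "ks \<in> Om K n" "k < K" for ks k using gi that by blast
    show "(\<Sum>k<K. q k * xi (ks(t:=k))) = 0" if "ks \<in> Om K n" for ks
      using mz[OF st that] unfolding xi_def .
  qed
  have E1: "expect_seq K q n xi = 0" using zm[of "\<lambda>_. 1"] by simp
  have E2: "expect_seq K q n (\<lambda>ks. y t ks * xi ks) = 0" using zm[of "y t"] ind[OF tn] by blast
  have E3: "expect_seq K q n (\<lambda>ks. (y t ks)^3 * xi ks) = 0" using zm[of "\<lambda>ks. (y t ks)^3"] ind[OF tn] by simp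
  have Ey: "expect_seq K q n (y (Suc t)) = 0"
  proof -
    have "y (Suc t) = (\<lambda>ks. y t ks + xi ks)" by (rule ext) (simp add: ysplit)
    then show ?thesis using E_add[of K q n "y t" xi] E1 IH by simp
  qed
  have "expect_seq K q n (\<lambda>ks. (y (Suc t) ks)^2) \<le> expect_seq K q n (\<lambda>ks. (y t ks)^2 + 2*(y t ks * xi ks) + c^2)"
    unfolding ysplit by (rule E_mono[OF qn]) (rule poly2[OF xi_b])
  also have "\<dots> = expect_seq K q n (\<lambda>ks. (y t ks)^2) + c^2"
    using E2 E_one[OF qs, of n "c^2"] by (simp add: E_add E_cmult)
  also have "\<dots> \<le> 2*B^2/(r+1) + B^2/r^2" using IH rt unfolding c_def by (simp add: power_divide)
  also have "\<dots> \<le> 2*B^2/r" using ar2[OF r1, of "B^2"] by simp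
  finally have E2b: "expect_seq K q n (\<lambda>ks. (y (Suc t) ks)^2) \<le> 2*B^2/real (n - Suc t)" using rS by simp
  have "expect_seq K q n (\<lambda>ks. (y (Suc t) ks)^4) \<le>
      expect_seq K q n (\<lambda>ks. (y t ks)^4 + 4*((y t ks)^3 * xi ks) + 6*c^2*(y t ks)^2 + 4*A*c^3 + c^4)"
    unfolding ysplit by (rule E_mono[OF qn]) (rule poly4[OF xi_b bd[OF tn]])
  also have "\<dots> = expect_seq K q n (\<lambda>ks. (y t ks)^4) + 6*c^2*expect_seq K q n (\<lambda>ks. (y t ks)^2) + 4*A*c^3 + c^4"
    using E3 E_one[OF qs, of n] by (simp add: E_add E_cmult)
  also have "\<dots> \<le> 2*(12*B^4+4*A*B^3+B^4)/(r+1)^2 + 6*c^2*(2*B^2/(r+1)) + 4*A*c^3 + c^4"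
    using IH rt c0 A0 by (intro add_mono mult_left_mono) auto
  finally have F4: "expect_seq K q n (\<lambda>ks. (y (Suc t) ks)^4) \<le> 2*(12*B^4+4*A*B^3+B^4)/(r+1)^2 + 6*c^2*(2*B^2/(r+1)) + 4*A*c^3 + c^4" .
  have "6*c^2*(2*B^2/(r+1)) + 4*A*c^3 + c^4 \<le> (12*B^4+4*A*B^3+B^4)/r^3"
  proof -
    have r0: "0 < r" using r1 by simp
    have a: "6*c^2*(2*B^2/(r+1)) \<le> 12*B^4/r^3"
    proof -
      have "6*c^2*(2*B^2/(r+1)) = 12*B^4/(r^2*(r+1))" unfolding c_def using r0
        by (simp add: power_divide field_simps power2_eq_square power4_eq_xxxx)
      also have "\<dots> \<le> 12*B^4/(r^2*r)" using r0 by (intro divide_left_mono mult_left_mono) auto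
      finally show ?thesis by (simp add: power3_eq_cube power2_eq_square mult_ac)
    qed
    have b: "4*A*c^3 = 4*A*B^3/r^3" unfolding c_def by (simp add: power_divide)
    have cc: "c^4 \<le> B^4/r^3"
    proof -
      have "c^4 = B^4/(r^3*r)" unfolding c_def by (simp add: power_divide power4_eq_xxxx power3_eq_cube mult_ac)
      also have "\<dots> \<le> B^4/(r^3*1)" using r0 r1 by (intro divide_left_mono mult_left_mono) auto
      finally show ?thesis by simp
    qed
    show ?thesis using a b cc by (simp add: add_divide_distrib)
  qed
  with F4 have "expect_seq K q n (\<lambda>ks. (y (Suc t) ks)^4) \<le>
      2*(12*B^4+4*A*B^3+B^4)/(r+1)^2 + (12*B^4+4*A*B^3+B^4)/r^3" by linarith
  also have "\<dots> \<le> 2*(12*B^4+4*A*B^3+B^4)/r^2" using ar4[OF r1, of "12*B^4+4*A*B^3+B^4"] A0 B0 by simp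
  finally show ?case using Ey E2b rS by simp
qed




context mk begin

definition "st n ks t = pol_state m d Delta sol n ks t"
definition "dd n ks t = pol_d m n (fst (st n ks t)) t"
abbreviation "ok n ks t \<equiv> snd (st n ks t)"
abbreviation "cc n ks t \<equiv> fst (st n ks t)"
abbreviation "used n ks t \<equiv> pol_used_d m d Delta sol n ks t"

lemma st0: "st n ks 0 = ((\<lambda>j. real n * d j), True)"
  unfolding st_def by simp

lemma used_eq0: "used n ks t = (if ok n ks t \<and> inb (dd n ks t) then dd n ks t else d)"
  unfolding pol_used_d_def dd_def st_def by (simp split: prod.split)

lemma stSuc: "st n ks (Suc t) = ((\<lambda>j. cc n ks t j - sol (used n ks t) (ks t) j), ok n ks t \<and> inb (dd n ks t))"
  unfolding st_def used_eq0 unfolding st_def dd_def by (simp add: Let_def split: prod.split)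

lemma okSuc: "ok n ks (Suc t) = (ok n ks t \<and> inb (dd n ks t))"
  using stSuc by simp

lemma ccSuc: "cc n ks (Suc t) j = cc n ks t j - sol (used n ks t) (ks t) j"
  using stSuc by simp

lemma used_eq: "used n ks t = (if ok n ks (Suc t) then dd n ks t else d)"
  unfolding used_eq0 okSuc ..

lemma alloc_eq: "pol_alloc m d Delta sol n ks t = sol (used n ks t) (ks t)"
  unfolding pol_alloc_def ..

lemma used_inb: "inb (used n ks t)"
  unfolding used_eq okSuc using inb_d by auto

lemma indep_st: "(\<And>s. s < t \<Longrightarrow> ks s = ks' s) \<Longrightarrow> st n ks t = st n ks' t"
proof (induction t)
  case 0 then show ?case by (simp add: st0)
next
  case (Suc t)
  have IH: "st n ks t = st n ks' t" using Suc by auto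
  have "ks t = ks' t" using Suc by auto
  moreover have "dd n ks t = dd n ks' t" unfolding dd_def IH ..
  moreover have "used n ks t = used n ks' t" unfolding used_eq0 IH \<open>dd n ks t = dd n ks' t\<close> ..
  ultimately show ?case unfolding stSuc IH by simp
qed

lemma indep_upd: "st n (ks(t:=k)) t = st n ks t"
  by (rule indep_st) simp

lemma dd_upd: "dd n (ks(t:=k)) t = dd n ks t"
  unfolding dd_def indep_upd ..

lemma used_upd: "used n (ks(t:=k)) t = used n ks t"
  unfolding used_eq0 indep_upd dd_upd ..

lemma okSuc_upd: "ok n (ks(t:=k)) (Suc t) = ok n ks (Suc t)"
  unfolding okSuc indep_upd dd_upd ..

fun Mst :: "nat \<Rightarrow> (nat \<Rightarrow> nat) \<Rightarrow> nat \<Rightarrow> nat \<Rightarrow> real" where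
  "Mst n ks 0 = d"
| "Mst n ks (Suc t) = (if ok n ks (Suc t) then dd n ks (Suc t) else Mst n ks t)"

lemma Mst_indep: "(\<And>s. s < t \<Longrightarrow> ks s = ks' s) \<Longrightarrow> Mst n ks t = Mst n ks' t"
proof (induction t)
  case 0 then show ?case by simp
next
  case (Suc t)
  have "st n ks (Suc t) = st n ks' (Suc t)" using Suc.prems by (rule indep_st)
  then have "ok n ks (Suc t) = ok n ks' (Suc t)" "dd n ks (Suc t) = dd n ks' (Suc t)"
    unfolding dd_def by simp_all
  then show ?case using Suc by simp
qed

lemma Mst_upd: "Mst n (ks(t:=k)) t = Mst n ks t"
  by (rule Mst_indep) simp

lemma dd0: "0 < n \<Longrightarrow> dd n ks 0 = d"
  unfolding dd_def st0 pol_d_def by (rule ext) simp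

lemma M_ok: "0 < n \<Longrightarrow> ok n ks t \<Longrightarrow> Mst n ks t = dd n ks t"
  by (cases t) (simp_all add: dd0)

lemma M_out: "0 < n \<Longrightarrow> \<not> ok n ks (Suc t) \<Longrightarrow> \<not> inb (Mst n ks t)"
proof (induction t)
  case 0
  then show ?case using okSuc[of n ks 0] st0[of n ks] M_ok[of n ks 0] by (simp add: st0)
next
  case (Suc t)
  show ?case
  proof (cases "ok n ks (Suc t)")
    case True
    then have "\<not> inb (dd n ks (Suc t))" using Suc.prems okSuc[of n ks "Suc t"] by simp
    then show ?thesis using M_ok[OF Suc.prems(1) True] by simp
  next
    case False
    then show ?thesis using Suc by simp
  qed
qed

lemma cc_dd: "t < n \<Longrightarrow> cc n ks t j = real (n - t) * dd n ks t j"
  unfolding dd_def pol_d_def by simp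

lemma incr:
  assumes "Suc t < n"
  shows "Mst n ks (Suc t) j - Mst n ks t j =
    (if ok n ks (Suc t) then (dd n ks t j - sol (dd n ks t) (ks t) j) / real (n - Suc t) else 0)"
proof (cases "ok n ks (Suc t)")
  case True
  have n0: "0 < n" using assms by simp
  have okt: "ok n ks t" using True okSuc by simp
  have Mt: "Mst n ks t = dd n ks t" using M_ok[OF n0 okt] .
  have u: "used n ks t = dd n ks t" using True used_eq by simp
  have "Mst n ks (Suc t) j = cc n ks (Suc t) j / real (n - Suc t)"
    using True by (simp add: dd_def pol_d_def)
  also have "\<dots> = (real (n - t) * dd n ks t j - sol (dd n ks t) (ks t) j) / real (n - Suc t)"
    unfolding ccSuc u cc_dd[of t n ks j, OF Suc_lessD[OF assms]] ..
  finally have e: "Mst n ks (Suc t) j = (real (n - t) * dd n ks t j - sol (dd n ks t) (ks t) j) / real (n - Suc t)" .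
  have rr: "real (n - t) = real (n - Suc t) + 1" using assms by simp
  have r0: "0 < real (n - Suc t)" using assms by simp
  show ?thesis unfolding e Mt rr using True r0 by (simp add: field_simps)
next
  case False
  then show ?thesis by simp
qed

lemma inc_bound:
  assumes t: "Suc t < n" and ks: "ks \<in> Om K n" and j: "j < m"
  shows "\<bar>Mst n ks (Suc t) j - Mst n ks t j\<bar> \<le> Bd j / real (n - Suc t)"
proof (cases "ok n ks (Suc t)")
  case True
  have bx: "inb (dd n ks t)" using True okSuc by simp
  have kt: "ks t < K" using PiE_mem[OF ks, of t] t by simp
  have "\<bar>dd n ks t j - sol (dd n ks t) (ks t) j\<bar> \<le> Bd j" by (rule diff_le_B[OF bx kt j])
  then show ?thesis unfolding incr[OF t] using True t by (simp add: abs_div divide_right_mono)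
next
  case False
  then show ?thesis unfolding incr[OF t] using B_pos[OF j] by simp
qed

lemma M_bound:
  assumes ks: "ks \<in> Om K n" and j: "j < m"
  shows "t < n \<Longrightarrow> \<bar>Mst n ks t j - d j\<bar> \<le> Delta j + Bd j"
proof (induction t)
  case 0 then show ?case using Delta B_pos j by (simp add: less_imp_le)
next
  case (Suc t)
  show ?case
  proof (cases "ok n ks (Suc t)")
    case True
    have n0: "0 < n" using Suc by simp
    have okt: "ok n ks t" and bx: "inb (dd n ks t)" using True okSuc by auto
    have "\<bar>Mst n ks t j - d j\<bar> \<le> Delta j" using M_ok[OF n0 okt] boxD[OF bx j] by auto
    moreover have "\<bar>Mst n ks (Suc t) j - Mst n ks t j\<bar> \<le> Bd j"
    proof -
      have "\<bar>Mst n ks (Suc t) j - Mst n ks t j\<bar> \<le> Bd j / real (n - Suc t)" by (rule inc_bound[OF Suc.prems ks j])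
      also have "\<dots> \<le> Bd j" using B_pos[OF j] Suc.prems by (simp add: divide_le_eq)
      finally show ?thesis .
    qed
    ultimately show ?thesis by linarith
  next
    case False
    then show ?thesis using Suc by simp
  qed
qed

lemma mz:
  assumes t: "Suc t < n" and ks: "ks \<in> Om K n" and j: "j < m"
  shows "(\<Sum>k<K. q k * ((Mst n (ks(t:=k)) (Suc t) j - d j) - (Mst n (ks(t:=k)) t j - d j))) = 0"
proof -
  have e: "(Mst n (ks(t:=k)) (Suc t) j - d j) - (Mst n (ks(t:=k)) t j - d j) =
    (if ok n ks (Suc t) then (dd n ks t j - sol (dd n ks t) k j) / real (n - Suc t) else 0)" for k
    using incr[OF t, of "ks(t:=k)" j] okSuc_upd dd_upd by simp
  show ?thesis
  proof (cases "ok n ks (Suc t)")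
    case True
    have bx: "inb (dd n ks t)" using True okSuc by simp
    have "(\<Sum>k<K. q k * ((dd n ks t j - sol (dd n ks t) k j) / real (n - Suc t))) =
       ((\<Sum>k<K. q k) * dd n ks t j - (\<Sum>k<K. q k * sol (dd n ks t) k j)) / real (n - Suc t)"
    proof -
      have "(\<Sum>k<K. q k * ((dd n ks t j - sol (dd n ks t) k j) / real (n - Suc t))) =
         (\<Sum>k<K. q k * dd n ks t j - q k * sol (dd n ks t) k j) / real (n - Suc t)"
        by (simp add: sum_divide_distrib right_diff_distrib)
      also have "\<dots> = ((\<Sum>k<K. q k * dd n ks t j) - (\<Sum>k<K. q k * sol (dd n ks t) k j)) / real (n - Suc t)"
        by (simp add: sum_subtractf)
      also have "(\<Sum>k<K. q k * dd n ks t j) = (\<Sum>k<K. q k) * dd n ks t j" by (simp add: sum_distrib_right)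
      finally show ?thesis .
    qed
    also have "\<dots> = 0" using tight[OF bx j] q_sum by simp
    finally show ?thesis unfolding e using True by simp
  next
    case False then show ?thesis unfolding e by simp
  qed
qed

definition "beta j = 2*(12*Bd j^4 + 4*(Delta j + Bd j)*Bd j^3 + Bd j^4)"

lemma moments:
  assumes t: "t < n" and j: "j < m"
  shows "expect_seq K q n (\<lambda>ks. Mst n ks t j - d j) = 0 \<and>
     expect_seq K q n (\<lambda>ks. (Mst n ks t j - d j)^2) \<le> 2*Bd j^2/real (n-t) \<and>
     expect_seq K q n (\<lambda>ks. (Mst n ks t j - d j)^4) \<le> beta j/(real (n-t))^2"
proof -
  have A0: "0 \<le> Delta j + Bd j" using Delta B_pos j by (simp add: add_nonneg_nonneg less_imp_le)
  have H: "t < n \<Longrightarrow> expect_seq K q n ((\<lambda>t ks. Mst n ks t j - d j) t) = 0 \<and>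
     expect_seq K q n (\<lambda>ks. ((\<lambda>t ks. Mst n ks t j - d j) t ks)^2) \<le> 2*Bd j^2/real (n-t) \<and>
     expect_seq K q n (\<lambda>ks. ((\<lambda>t ks. Mst n ks t j - d j) t ks)^4) \<le> 2*(12*Bd j^4+4*(Delta j + Bd j)*Bd j^3+Bd j^4)/(real (n-t))^2"
  proof (rule mart[OF q_sum _ _ A0])
    show "\<forall>k<K. 0 \<le> q k" using q_pos by (simp add: less_imp_le)
    show "0 \<le> Bd j" using B_pos[OF j] by simp
    show "\<And>ks. ks \<in> Om K n \<Longrightarrow> Mst n ks 0 j - d j = 0" by simp
    show "\<And>t ks. Suc t < n \<Longrightarrow> ks \<in> Om K n \<Longrightarrow> \<bar>(Mst n ks (Suc t) j - d j) - (Mst n ks t j - d j)\<bar> \<le> Bd j / real (n - Suc t)"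
      using inc_bound j by simp
    show "\<And>t ks. Suc t < n \<Longrightarrow> ks \<in> Om K n \<Longrightarrow>
      (\<Sum>k<K. q k * ((Mst n (ks(t:=k)) (Suc t) j - d j) - (Mst n (ks(t:=k)) t j - d j))) = 0"
      using mz j by blast
    show "\<And>t ks k. t < n \<Longrightarrow> ks \<in> Om K n \<Longrightarrow> k < K \<Longrightarrow> Mst n (ks(t:=k)) t j - d j = Mst n ks t j - d j"
      using Mst_upd by simp
    show "\<And>t ks. t < n \<Longrightarrow> ks \<in> Om K n \<Longrightarrow> \<bar>Mst n ks t j - d j\<bar> \<le> Delta j + Bd j"
      using M_bound j by blast
  qed
  show ?thesis using H[OF t] unfolding beta_def by simp
qed

definition "bad n ks t = (if ok n ks (Suc t) then 0 else (1::real))"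

lemma bad_le:
  assumes n0: "0 < n" and p: "even p"
  shows "bad n ks t \<le> (\<Sum>j<m. (Mst n ks t j - d j)^p / Delta j^p)"
proof (cases "ok n ks (Suc t)")
  case True
  then show ?thesis unfolding bad_def using p by (auto intro!: sum_nonneg divide_nonneg_nonneg simp: zero_le_even_power)
next
  case False
  have "\<not> inb (Mst n ks t)" using M_out[OF n0 False] .
  then obtain j where j: "j < m" and out: "\<not> (d j - Delta j \<le> Mst n ks t j \<and> Mst n ks t j \<le> d j + Delta j)"
    unfolding in_box_def by auto
  have D: "0 < Delta j" using Delta j by auto
  have "1 < \<bar>(Mst n ks t j - d j) / Delta j\<bar>" using out D by (auto simp: abs_div less_divide_eq)
  then have "1 \<le> \<bar>(Mst n ks t j - d j) / Delta j\<bar>^p" by (simp add: one_le_power less_imp_le)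
  also have "\<dots> = (Mst n ks t j - d j)^p / Delta j^p" using p by (simp add: power_even_abs power_divide)
  also have "\<dots> \<le> (\<Sum>j<m. (Mst n ks t j - d j)^p / Delta j^p)"
    using j p by (intro member_le_sum) (auto intro!: divide_nonneg_nonneg simp: zero_le_even_power)
  finally show ?thesis unfolding bad_def using False by simp
qed

end



context mk begin

lemma ln_lb: fixes s rho :: real assumes "0 < rho" "rho \<le> 1 + s"
  shows "s - s^2/rho \<le> ln (1 + s)"
proof -
  have p: "0 < 1 + s" using assms by linarith
  have "1 - 1/(1+s) \<le> ln (1+s)" using p by (rule ln_ge_one_minus_inv)
  moreover have "1 - 1/(1+s) = s - s^2/(1+s)" using p by (simp add: field_simps power2_eq_square)
  moreover have "s^2/(1+s) \<le> s^2/rho" using assms p by (intro divide_left_mono) auto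
  ultimately show ?thesis by linarith
qed


definition "rho = Min (insert 1 ((\<lambda>j. (d j - Delta j)/d j) ` {..<m}))"
definition "Vf d' = CE_obj m K q w u (sol d')"
definition "alpha j = (\<Sum>k<K. q k * w k * (u k j * sol d k j / v d k)) / d j"
definition "Gc = real m * (\<Sum>k<K. q k * w k) / rho"

lemma rho_pos: "0 < rho"
  unfolding rho_def using Delta d_pos by (subst Min_gr_iff) auto

lemma rho_le: "j < m \<Longrightarrow> rho \<le> (d j - Delta j)/d j"
  unfolding rho_def by (rule Min_le) auto

lemma alpha_nonneg: "j < m \<Longrightarrow> 0 \<le> alpha j"
  unfolding alpha_def using q_pos w_pos u_nonneg sol_nonneg[OF inb_d] v_pos[OF inb_d] d_pos
  by (intro divide_nonneg_pos sum_nonneg mult_nonneg_nonneg) (auto simp: less_imp_le)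

lemma Gc_nonneg: "0 \<le> Gc"
  unfolding Gc_def using rho_pos q_pos w_pos
  by (intro divide_nonneg_pos mult_nonneg_nonneg sum_nonneg) (auto simp: less_imp_le)

lemma LBk:
  assumes bx: "inb d'" and k: "k < K"
  shows "ln (v d k) + (\<Sum>j<m. (u k j * sol d k j / v d k) * ((d' j - d j)/d j))
          - (real m * (\<Sum>j<m. ((d' j - d j)/d j)^2))/rho
        \<le> ln (\<Sum>j<m. u k j * (sol d k j * (d' j / d j)))"
proof -
  define V where "V = v d k"
  define th where "th = (\<lambda>j. u k j * sol d k j / V)"
  define x where "x = (\<lambda>j. (d' j - d j)/d j)"
  define s where "s = (\<Sum>j<m. th j * x j)"
  have V: "0 < V" unfolding V_def using v_pos[OF inb_d k] .
  have th0: "j < m \<Longrightarrow> 0 \<le> th j" for j unfolding th_def using u_nonneg sol_nonneg[OF inb_d k] V k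
    by (auto intro!: divide_nonneg_pos mult_nonneg_nonneg)
  have th1: "j < m \<Longrightarrow> th j \<le> 1" for j
  proof -
    assume j: "j < m"
    have "u k j * sol d k j \<le> V" unfolding V_def v_def
      using j u_nonneg sol_nonneg[OF inb_d k] k by (intro member_le_sum[of j "{..<m}" "\<lambda>j. u k j * sol d k j"]) auto
    then show ?thesis unfolding th_def using V by simp
  qed
  have r: "d' j / d j = 1 + x j" if "j < m" for j
  proof -
    have "0 < d j" using d_pos that by simp
    then show ?thesis unfolding x_def by (simp add: field_simps)
  qed
  have sum_eq: "(\<Sum>j<m. u k j * (sol d k j * (d' j / d j))) = V * (1 + s)"
  proof -
    have "(\<Sum>j<m. u k j * (sol d k j * (d' j / d j))) = (\<Sum>j<m. V * th j * (1 + x j))"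
      using V r by (intro sum.cong) (auto simp: th_def)
    also have "\<dots> = V * (\<Sum>j<m. th j) + V * s" unfolding s_def
      by (simp add: distrib_left sum.distrib sum_distrib_left mult_ac)
    also have "(\<Sum>j<m. th j) = 1" unfolding th_def V_def v_def using v_pos[OF inb_d k]
      by (simp add: sum_divide_distrib[symmetric] v_def)
    finally show ?thesis by (simp add: algebra_simps)
  qed
  have rho_s: "rho \<le> 1 + s"
  proof -
    have "rho * V = (\<Sum>j<m. u k j * sol d k j * rho)" unfolding V_def v_def by (simp add: sum_distrib_left mult.commute)
    also have "\<dots> \<le> (\<Sum>j<m. u k j * (sol d k j * (d' j / d j)))"
    proof (intro sum_mono)
      fix j assume j: "j \<in> {..<m}"
      have "rho \<le> d' j / d j"
      proof -
        have "rho \<le> (d j - Delta j)/d j" using rho_le j by simp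
        also have "\<dots> \<le> d' j / d j" using boxD[OF bx] j d_pos by (intro divide_right_mono) auto
        finally show ?thesis .
      qed
      moreover have "0 \<le> u k j * sol d k j" using u_nonneg sol_nonneg[OF inb_d k] j k by simp
      ultimately have "u k j * sol d k j * rho \<le> u k j * sol d k j * (d' j / d j)" by (rule mult_left_mono)
      then show "u k j * sol d k j * rho \<le> u k j * (sol d k j * (d' j / d j))" by (simp only: mult.assoc)
    qed
    also have "\<dots> = V * (1 + s)" by (rule sum_eq)
    finally show ?thesis using V by (simp add: mult.commute)
  qed
  have s2: "s^2 \<le> real m * (\<Sum>j<m. (x j)^2)"
  proof -
    have "\<bar>s\<bar> \<le> (\<Sum>j<m. \<bar>th j * x j\<bar>)" unfolding s_def by (rule sum_abs)
    also have "\<dots> \<le> (\<Sum>j<m. \<bar>x j\<bar>)"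
    proof (intro sum_mono)
      fix j assume "j \<in> {..<m}"
      then show "\<bar>th j * x j\<bar> \<le> \<bar>x j\<bar>" using th0 th1 by (simp add: abs_mult mult_left_le_one_le)
    qed
    finally have "\<bar>s\<bar> \<le> (\<Sum>j<m. \<bar>x j\<bar>)" .
    then have "\<bar>s\<bar>^2 \<le> (\<Sum>j<m. \<bar>x j\<bar>)^2" by (intro power_mono) auto
    also have "\<dots> \<le> (\<Sum>j<m. \<bar>x j\<bar>^2) * card {..<m}" by (rule sum_squared_le_sum_of_squares)
    finally show ?thesis by (simp add: mult.commute)
  qed
  have "s - s^2/rho \<le> ln (1 + s)" using rho_pos rho_s by (rule ln_lb)
  moreover have "s^2/rho \<le> (real m * (\<Sum>j<m. ((d' j - d j)/d j)^2))/rho" using s2 rho_pos unfolding x_def by (intro divide_right_mono) auto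
  moreover have "ln (\<Sum>j<m. u k j * (sol d k j * (d' j / d j))) = ln V + ln (1 + s)"
    unfolding sum_eq using V rho_pos rho_s by (simp add: ln_mult)
  ultimately have G: "ln V + s - (real m * (\<Sum>j<m. ((d' j - d j)/d j)^2))/rho \<le> ln (\<Sum>j<m. u k j * (sol d k j * (d' j / d j)))"
    by linarith
  have "s = (\<Sum>j<m. (u k j * sol d k j / v d k) * ((d' j - d j)/d j))"
    unfolding s_def th_def x_def V_def ..
  with G show ?thesis unfolding V_def by simp
qed

lemma Vf_d: "Vf d = (\<Sum>k<K. q k * w k * ln (v d k))"
  unfolding Vf_def CE_obj_def v_def ..

lemma LB:
  assumes bx: "inb d'"
  shows "Vf d + (\<Sum>j<m. alpha j * (d' j - d j)) - Gc * (\<Sum>j<m. ((d' j - d j)/d j)^2) \<le> Vf d'"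
proof -
  define z where "z = (\<lambda>k j. sol d k j * (d' j / d j))"
  define Q where "Q = (\<Sum>j<m. ((d' j - d j)/d j)^2)"
  have rpos: "j < m \<Longrightarrow> 0 < d' j / d j" for j using box_pos[OF bx] d_pos by simp
  have feas: "CE_feasible m K q u d' z"
    unfolding CE_feasible_def CE_dom_def
  proof (intro conjI allI impI CollectI)
    fix k j assume "k < K" "j < m"
    then show "0 \<le> z k j" unfolding z_def using sol_nonneg[OF inb_d] rpos by (metis less_imp_le mult_nonneg_nonneg)
  next
    fix k assume k: "k < K"
    have "0 < (\<Sum>j<m. u k j * sol d k j) * rho" using v_pos[OF inb_d k] rho_pos unfolding v_def by simp
    also have "\<dots> \<le> (\<Sum>j<m. u k j * z k j)" unfolding sum_distrib_right
    proof (intro sum_mono)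
      fix j assume j: "j \<in> {..<m}"
      have "rho \<le> d' j / d j"
      proof -
        have "rho \<le> (d j - Delta j)/d j" using rho_le j by simp
        also have "\<dots> \<le> d' j / d j" using boxD[OF bx] j d_pos by (intro divide_right_mono) auto
        finally show ?thesis .
      qed
      moreover have "0 \<le> u k j * sol d k j" using u_nonneg sol_nonneg[OF inb_d k] j k by simp
      ultimately have "u k j * sol d k j * rho \<le> u k j * sol d k j * (d' j / d j)" by (rule mult_left_mono)
      then show "u k j * sol d k j * rho \<le> u k j * z k j" unfolding z_def by (simp only: mult.assoc)
    qed
    finally show "0 < (\<Sum>j<m. u k j * z k j)" .
  next
    fix j assume j: "j < m"
    have "(\<Sum>k<K. q k * z k j) = (\<Sum>k<K. q k * sol d k j) * (d' j / d j)" unfolding z_def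
      by (simp add: sum_distrib_right mult.assoc sum_divide_distrib)
    also have "\<dots> = d' j" using tight[OF inb_d j] d_pos j by force
    finally show "(\<Sum>k<K. q k * z k j) \<le> d' j" by simp
  qed
  have "(\<Sum>k<K. q k * w k * (ln (v d k) + (\<Sum>j<m. (u k j * sol d k j / v d k) * ((d' j - d j)/d j)) - (real m * Q)/rho))
      \<le> CE_obj m K q w u z"
    unfolding CE_obj_def z_def Q_def
    using LBk[OF bx] q_pos w_pos by (intro sum_mono mult_left_mono) (auto simp: less_imp_le)
  also have "\<dots> \<le> Vf d'" unfolding Vf_def by (rule sol_best[OF bx feas])
  finally have 1: "(\<Sum>k<K. q k * w k * (ln (v d k) + (\<Sum>j<m. (u k j * sol d k j / v d k) * ((d' j - d j)/d j)) - (real m * Q)/rho)) \<le> Vf d'" .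
  have "(\<Sum>k<K. q k * w k * (ln (v d k) + (\<Sum>j<m. (u k j * sol d k j / v d k) * ((d' j - d j)/d j)) - (real m * Q)/rho))
      = Vf d + (\<Sum>k<K. q k * w k * (\<Sum>j<m. (u k j * sol d k j / v d k) * ((d' j - d j)/d j))) - Gc * Q"
    unfolding Vf_d Gc_def by (simp add: algebra_simps sum.distrib sum_subtractf sum_distrib_left sum_distrib_right sum_divide_distrib)
  also have "(\<Sum>k<K. q k * w k * (\<Sum>j<m. (u k j * sol d k j / v d k) * ((d' j - d j)/d j))) = (\<Sum>j<m. alpha j * (d' j - d j))"
    unfolding alpha_def by (simp add: sum_distrib_left sum_distrib_right sum_divide_distrib sum.swap[of _ "{..<K}"] mult_ac)
  finally show ?thesis using 1 unfolding Q_def by simp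
qed

end



lemma sum_rev_Suc: "(\<Sum>t<Suc n. f (Suc n - t)) = f (Suc n) + (\<Sum>t<n. f (n - t))"
  by (subst sum.lessThan_Suc_shift) simp

lemma ln_ge_1mi: "0 < (x::real) \<Longrightarrow> 1 - 1/x \<le> ln x"
  using ln_le_minus_one[of "1/x"] by (simp add: ln_div)

lemma harm_bound: "0 < n \<Longrightarrow> (\<Sum>t<n. 1 / real (n - t)) \<le> 1 + ln (real n)"
proof (induction n)
  case 0 then show ?case by simp
next
  case (Suc n)
  show ?case
  proof (cases "n = 0")
    case True then show ?thesis by simp
  next
    case False
    then have IH: "(\<Sum>t<n. 1 / real (n - t)) \<le> 1 + ln (real n)" using Suc by simp
    have np: "0 < real n" using False by simp
    have "1 / real (Suc n) \<le> ln (real (Suc n)) - ln (real n)"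
    proof -
      have "1 - 1 / (real (Suc n) / real n) \<le> ln (real (Suc n) / real n)" using np by (intro ln_ge_1mi) simp
      moreover have "1 - 1 / (real (Suc n) / real n) = 1 / real (Suc n)" using np by (simp add: field_simps)
      moreover have "ln (real (Suc n) / real n) = ln (real (Suc n)) - ln (real n)" using np by (simp add: ln_div)
      ultimately show ?thesis by simp
    qed
    then show ?thesis unfolding sum_rev_Suc[of "\<lambda>x. 1 / real x"] using IH by simp
  qed
qed

lemma sq_bound: "(\<Sum>t<n. 1 / (real (n - t))^2) \<le> 2"
proof -
  have "0 < n \<Longrightarrow> (\<Sum>t<n. 1 / (real (n - t))^2) \<le> 2 - 1 / real n"
  proof (induction n)
    case 0 then show ?case by simp
  next
    case (Suc n)
    show ?case
    proof (cases "n = 0")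
      case True then show ?thesis by simp
    next
      case False
      then have IH: "(\<Sum>t<n. 1 / (real (n - t))^2) \<le> 2 - 1 / real n" using Suc by simp
      have np: "0 < real n" using False by simp
      have "1 / (real (Suc n))^2 \<le> 1 / real n - 1 / real (Suc n)"
      proof -
        have "1 / real n - 1 / real (Suc n) = 1 / (real n * real (Suc n))" using np by (simp add: field_simps)
        moreover have "1 / (real (Suc n))^2 \<le> 1 / (real n * real (Suc n))"
          using np by (intro divide_left_mono) (auto simp: power2_eq_square)
        ultimately show ?thesis by simp
      qed
      then show ?thesis unfolding sum_rev_Suc[of "\<lambda>x. 1 / (real x)^2"] using IH by simp
    qed
  qed
  then show ?thesis by (cases "n = 0") (auto intro: order_trans)
qed

context mk begin

definition "SA = (\<Sum>j<m. alpha j * (Delta j + Bd j))"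
definition "cf j = SA / Delta j^2 + Gc / d j^2"
definition "CR = (\<Sum>j<m. cf j * (2 * Bd j^2))"

lemma SA_nonneg: "0 \<le> SA"
  unfolding SA_def using alpha_nonneg Delta B_pos
  by (intro sum_nonneg mult_nonneg_nonneg) (auto simp: less_imp_le)

lemma cf_nonneg: "j < m \<Longrightarrow> 0 \<le> cf j"
  unfolding cf_def using SA_nonneg Gc_nonneg by simp

lemma CR_nonneg: "0 \<le> CR"
  unfolding CR_def using cf_nonneg by (intro sum_nonneg mult_nonneg_nonneg) auto

lemma pointwise_LB:
  assumes n0: "0 < n" and t: "t < n" and ks: "ks \<in> Om K n"
  shows "Vf d + (\<Sum>j<m. alpha j * (Mst n ks t j - d j) - cf j * (Mst n ks t j - d j)^2) \<le> Vf (used n ks t)"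
proof -
  let ?y = "\<lambda>j. Mst n ks t j - d j"
  let ?x = "\<lambda>j. used n ks t j - d j"
  have xy: "?x j = (if ok n ks (Suc t) then ?y j else 0)" for j
  proof (cases "ok n ks (Suc t)")
    case True
    then have "ok n ks t" using okSuc by simp
    then have "Mst n ks t = dd n ks t" using M_ok[OF n0] by simp
    then show ?thesis using True used_eq by simp
  next
    case False then show ?thesis using used_eq by simp
  qed
  have lin: "(\<Sum>j<m. alpha j * ?y j) - SA * bad n ks t \<le> (\<Sum>j<m. alpha j * ?x j)"
  proof (cases "ok n ks (Suc t)")
    case True then show ?thesis using xy by (simp add: bad_def)
  next
    case False
    have "(\<Sum>j<m. alpha j * ?y j) \<le> SA" unfolding SA_def
    proof (intro sum_mono)
      fix j assume j: "j \<in> {..<m}"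
      have "?y j \<le> Delta j + Bd j" using M_bound[OF ks _ t] j by (simp add: abs_le_iff)
      then show "alpha j * ?y j \<le> alpha j * (Delta j + Bd j)" using alpha_nonneg j by (intro mult_left_mono) auto
    qed
    then show ?thesis using False xy by (simp add: bad_def)
  qed
  have quad: "(\<Sum>j<m. (?x j / d j)^2) \<le> (\<Sum>j<m. ?y j^2 / d j^2)"
    using xy by (intro sum_mono) (simp add: power_divide)
  have badb: "bad n ks t \<le> (\<Sum>j<m. ?y j^2 / Delta j^2)" using bad_le[OF n0, of 2] by simp
  have "Vf d + (\<Sum>j<m. alpha j * ?x j) - Gc * (\<Sum>j<m. (?x j / d j)^2) \<le> Vf (used n ks t)"
    using LB[OF used_inb] by simp
  moreover have "Gc * (\<Sum>j<m. (?x j / d j)^2) \<le> Gc * (\<Sum>j<m. ?y j^2 / d j^2)"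
    using quad Gc_nonneg by (rule mult_left_mono)
  moreover have "SA * bad n ks t \<le> SA * (\<Sum>j<m. ?y j^2 / Delta j^2)"
    using badb SA_nonneg by (rule mult_left_mono)
  moreover have "(\<Sum>j<m. alpha j * ?y j - cf j * ?y j^2) =
      (\<Sum>j<m. alpha j * ?y j) - SA * (\<Sum>j<m. ?y j^2 / Delta j^2) - Gc * (\<Sum>j<m. ?y j^2 / d j^2)"
    unfolding cf_def by (simp add: sum_subtractf sum_distrib_left algebra_simps sum.distrib)
  ultimately show ?thesis using lin by linarith
qed

lemma E_Vf_used:
  assumes n0: "0 < n" and t: "t < n"
  shows "Vf d - CR / real (n - t) \<le> expect_seq K q n (\<lambda>ks. Vf (used n ks t))"
proof -
  let ?y = "\<lambda>j ks. Mst n ks t j - d j"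
  have qn: "\<forall>k<K. 0 \<le> q k" using q_pos by (simp add: less_imp_le)
  have f1: "expect_seq K q n (\<lambda>ks. Vf d + (\<Sum>j<m. alpha j * ?y j ks - cf j * (?y j ks)^2)) \<le>
      expect_seq K q n (\<lambda>ks. Vf (used n ks t))"
    by (rule E_mono[OF qn]) (rule pointwise_LB[OF n0 t])
  have f2: "expect_seq K q n (\<lambda>ks. Vf d + (\<Sum>j<m. alpha j * ?y j ks - cf j * (?y j ks)^2)) =
      Vf d + (\<Sum>j<m. alpha j * expect_seq K q n (?y j) - cf j * expect_seq K q n (\<lambda>ks. (?y j ks)^2))"
    by (simp add: E_add E_sum E_diff E_cmult E_one[OF q_sum])
  have f3: "(\<Sum>j<m. alpha j * expect_seq K q n (?y j) - cf j * expect_seq K q n (\<lambda>ks. (?y j ks)^2))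
      \<ge> (\<Sum>j<m. - (cf j * (2 * Bd j^2 / real (n - t))))"
  proof (intro sum_mono)
    fix j assume j: "j \<in> {..<m}"
    have M: "expect_seq K q n (?y j) = 0" "expect_seq K q n (\<lambda>ks. (?y j ks)^2) \<le> 2*Bd j^2/real (n-t)"
      using moments[OF t, of j] j by auto
    then show "- (cf j * (2 * Bd j^2 / real (n - t))) \<le> alpha j * expect_seq K q n (?y j) - cf j * expect_seq K q n (\<lambda>ks. (?y j ks)^2)"
    proof -
      have "cf j * expect_seq K q n (\<lambda>ks. (?y j ks)^2) \<le> cf j * (2*Bd j^2/real (n-t))"
        using M(2) cf_nonneg[of j] j by (intro mult_left_mono) auto
      then show ?thesis using M(1) by simp
    qed
  qed
  have f4: "(\<Sum>j<m. - (cf j * (2 * Bd j^2 / real (n - t)))) = - (CR / real (n - t))"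
    unfolding CR_def by (simp add: sum_negf sum_divide_distrib)
  have "Vf d - CR / real (n - t) = Vf d + (\<Sum>j<m. - (cf j * (2 * Bd j^2 / real (n - t))))"
    using f4 by simp
  also have "\<dots> \<le> Vf d + (\<Sum>j<m. alpha j * expect_seq K q n (?y j) - cf j * expect_seq K q n (\<lambda>ks. (?y j ks)^2))"
    using f3 by simp
  also have "\<dots> = expect_seq K q n (\<lambda>ks. Vf d + (\<Sum>j<m. alpha j * ?y j ks - cf j * (?y j ks)^2))"
    using f2 by simp
  also have "\<dots> \<le> expect_seq K q n (\<lambda>ks. Vf (used n ks t))" by (rule f1)
  finally show ?thesis .
qed

end



context mk begin

lemma E_online: "expect_seq K q n (online_util m w u d Delta sol n) = (\<Sum>t<n. expect_seq K q n (\<lambda>ks. Vf (used n ks t)))"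
proof -
  have "expect_seq K q n (online_util m w u d Delta sol n) =
      (\<Sum>t<n. expect_seq K q n (\<lambda>ks. w (ks t) * ln (\<Sum>j<m. u (ks t) j * pol_alloc m d Delta sol n ks t j)))"
    unfolding online_util_def by (rule E_sum)
  also have "\<dots> = (\<Sum>t<n. expect_seq K q n (\<lambda>ks. Vf (used n ks t)))"
  proof (rule sum.cong[OF refl])
    fix t assume "t \<in> {..<n}"
    then have t: "t < n" by simp
    have "expect_seq K q n (\<lambda>ks. w (ks t) * ln (\<Sum>j<m. u (ks t) j * pol_alloc m d Delta sol n ks t j)) =
       expect_seq K q n (\<lambda>ks. \<Sum>k<K. q k * (w ((ks(t:=k)) t) * ln (\<Sum>j<m. u ((ks(t:=k)) t) j * pol_alloc m d Delta sol n (ks(t:=k)) t j)))"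
      by (rule int_out[OF t q_sum])
    also have "\<dots> = expect_seq K q n (\<lambda>ks. Vf (used n ks t))"
      unfolding alloc_eq used_upd Vf_def CE_obj_def by (simp add: mult.assoc)
    finally show "expect_seq K q n (\<lambda>ks. w (ks t) * ln (\<Sum>j<m. u (ks t) j * pol_alloc m d Delta sol n ks t j)) =
       expect_seq K q n (\<lambda>ks. Vf (used n ks t))" .
  qed
  finally show ?thesis .
qed

lemma E_Bnd: "expect_seq K q n (Bnd n) = real n * Vf d"
proof -
  have "expect_seq K q n (Bnd n) = (\<Sum>t<n. expect_seq K q n (\<lambda>ks. w (ks t) * ln (v d (ks t)) - w (ks t))) + real n * (\<Sum>k<K. q k * w k)"
    unfolding Bnd_def by (simp add: E_add E_sum E_one[OF q_sum])
  also have "(\<Sum>t<n. expect_seq K q n (\<lambda>ks. w (ks t) * ln (v d (ks t)) - w (ks t))) =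
      (\<Sum>t<n. (\<Sum>k<K. q k * (w k * ln (v d k) - w k)))"
    by (intro sum.cong refl) (rule E_single[OF _ q_sum], simp)
  also have "\<dots> = real n * (\<Sum>k<K. q k * w k * ln (v d k)) - real n * (\<Sum>k<K. q k * w k)"
    by (simp add: right_diff_distrib sum_subtractf mult_ac)
  finally show ?thesis unfolding Vf_d by simp
qed

lemma regret_bound:
  assumes n0: "0 < n"
  shows "regret m K q w u d Delta sol n \<le> CR * (1 + ln (real n))"
proof -
  have qn: "\<forall>k<K. 0 \<le> q k" using q_pos by (simp add: less_imp_le)
  have "regret m K q w u d Delta sol n \<le> expect_seq K q n (\<lambda>ks. Bnd n ks - online_util m w u d Delta sol n ks)"
    unfolding regret_def by (rule E_mono[OF qn]) (simp add: offline_le)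
  also have "\<dots> = real n * Vf d - (\<Sum>t<n. expect_seq K q n (\<lambda>ks. Vf (used n ks t)))"
    by (simp add: E_diff E_Bnd E_online)
  also have "\<dots> \<le> real n * Vf d - (\<Sum>t<n. Vf d - CR / real (n - t))"
  proof -
    have "(\<Sum>t<n. Vf d - CR / real (n - t)) \<le> (\<Sum>t<n. expect_seq K q n (\<lambda>ks. Vf (used n ks t)))"
      using E_Vf_used[OF n0] by (intro sum_mono) simp
    then show ?thesis by simp
  qed
  also have "\<dots> = CR * (\<Sum>t<n. 1 / real (n - t))"
    by (simp add: sum_subtractf sum_distrib_left)
  also have "\<dots> \<le> CR * (1 + ln (real n))"
    using harm_bound[OF n0] CR_nonneg by (rule mult_left_mono)
  finally show ?thesis .
qed

lemma cc_sum: "cc n ks t j = real n * d j - (\<Sum>s<t. pol_alloc m d Delta sol n ks s j)"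
  by (induction t) (simp_all add: st0 ccSuc alloc_eq)

lemma bad_nonneg: "0 \<le> bad n ks t"
  unfolding bad_def by simp

lemma neg_cc:
  assumes ks: "ks \<in> Om K n" and j: "j < m"
  shows "t \<le> n \<Longrightarrow> - cc n ks t j \<le> Bd j * (1 + (\<Sum>s<t. bad n ks s))"
proof (induction t)
  case 0
  have "0 \<le> Bd j * (1 + (\<Sum>s<0. bad n ks s))" using B_pos[OF j] by simp
  moreover have "- cc n ks 0 j \<le> 0" using d_pos j by (simp add: st0 less_imp_le)
  ultimately show ?case by linarith
next
  case (Suc t)
  have t: "t < n" using Suc by simp
  have kt: "ks t < K" using PiE_mem[OF ks, of t] t by simp
  have x: "sol (used n ks t) (ks t) j \<le> Bd j" by (rule sol_le_B[OF used_inb kt j])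
  have cnt0: "0 \<le> (\<Sum>s<t. bad n ks s)" by (intro sum_nonneg bad_nonneg)
  show ?case
  proof (cases "ok n ks (Suc t)")
    case True
    have bx: "inb (dd n ks t)" using True okSuc by simp
    have "0 \<le> cc n ks t j" unfolding cc_dd[OF t] using box_pos[OF bx j] by simp
    then have "- cc n ks (Suc t) j \<le> Bd j" unfolding ccSuc using x by linarith
    also have "\<dots> \<le> Bd j * (1 + (\<Sum>s<Suc t. bad n ks s))"
      using B_pos[OF j] cnt0 True by (simp add: bad_def)
    finally show ?thesis .
  next
    case False
    have "- cc n ks (Suc t) j \<le> - cc n ks t j + Bd j" unfolding ccSuc using x by linarith
    also have "\<dots> \<le> Bd j * (1 + (\<Sum>s<t. bad n ks s)) + Bd j" using Suc t by simp
    also have "\<dots> = Bd j * (1 + (\<Sum>s<Suc t. bad n ks s))" using False by (simp add: bad_def algebra_simps)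
    finally show ?thesis .
  qed
qed

lemma viol_pt:
  assumes ks: "ks \<in> Om K n"
  shows "violation m d Delta sol n ks \<le> (\<Sum>j<m. Bd j) * (1 + (\<Sum>t<n. bad n ks t))"
proof -
  let ?f = "\<lambda>j. max 0 ((\<Sum>t<n. pol_alloc m d Delta sol n ks t j) - real n * d j)"
  have "violation m d Delta sol n ks = L2_set ?f {..<m}"
    unfolding violation_def L2_set_def ..
  also have "\<dots> \<le> sum ?f {..<m}" by (rule L2_set_le_sum) simp
  also have "\<dots> \<le> (\<Sum>j<m. Bd j * (1 + (\<Sum>t<n. bad n ks t)))"
  proof (intro sum_mono)
    fix j assume j: "j \<in> {..<m}"
    have "(\<Sum>t<n. pol_alloc m d Delta sol n ks t j) - real n * d j = - cc n ks n j" by (simp add: cc_sum)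
    also have "\<dots> \<le> Bd j * (1 + (\<Sum>t<n. bad n ks t))" using neg_cc[OF ks, of j n] j by simp
    finally show "?f j \<le> Bd j * (1 + (\<Sum>t<n. bad n ks t))"
      using B_pos[of j] j sum_nonneg[of "{..<n}" "bad n ks", OF bad_nonneg] by simp
  qed
  also have "\<dots> = (\<Sum>j<m. Bd j) * (1 + (\<Sum>t<n. bad n ks t))" by (simp add: sum_distrib_right)
  finally show ?thesis .
qed

lemma beta_nonneg: "j < m \<Longrightarrow> 0 \<le> beta j"
  unfolding beta_def using B_pos[of j] Delta by (auto intro!: add_nonneg_nonneg mult_nonneg_nonneg simp: less_imp_le)

definition "CV = (\<Sum>j<m. Bd j) * (1 + 2 * (\<Sum>j<m. beta j / Delta j^4))"

lemma viol_bound: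
  assumes n0: "0 < n"
  shows "exp_violation m K q d Delta sol n \<le> CV"
proof -
  have qn: "\<forall>k<K. 0 \<le> q k" using q_pos by (simp add: less_imp_le)
  define Cb where "Cb = (\<Sum>j<m. beta j / Delta j^4)"
  have Cb0: "0 \<le> Cb" unfolding Cb_def using beta_nonneg by (intro sum_nonneg divide_nonneg_nonneg) auto
  have SB: "0 \<le> (\<Sum>j<m. Bd j)" using B_pos by (intro sum_nonneg) (simp add: less_imp_le)
  have Eb: "expect_seq K q n (\<lambda>ks. bad n ks t) \<le> Cb * (1 / (real (n - t))^2)" if t: "t < n" for t
  proof -
    have "expect_seq K q n (\<lambda>ks. bad n ks t) \<le> expect_seq K q n (\<lambda>ks. \<Sum>j<m. (Mst n ks t j - d j)^4 / Delta j^4)"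
      by (rule E_mono[OF qn]) (rule bad_le[OF n0], simp)
    also have "\<dots> = (\<Sum>j<m. expect_seq K q n (\<lambda>ks. (Mst n ks t j - d j)^4) / Delta j^4)"
      by (simp add: E_sum E_cmult divide_inverse mult.commute)
    also have "\<dots> \<le> (\<Sum>j<m. beta j / (real (n - t))^2 / Delta j^4)"
      using moments[OF t] Delta by (intro sum_mono divide_right_mono) auto
    also have "\<dots> = Cb * (1 / (real (n - t))^2)" unfolding Cb_def
      by (simp add: sum_divide_distrib divide_divide_eq_left mult.commute)
    finally show ?thesis .
  qed
  have "exp_violation m K q d Delta sol n \<le> expect_seq K q n (\<lambda>ks. (\<Sum>j<m. Bd j) * (1 + (\<Sum>t<n. bad n ks t)))"
    unfolding exp_violation_def by (rule E_mono[OF qn]) (rule viol_pt)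
  also have "\<dots> = (\<Sum>j<m. Bd j) * (1 + (\<Sum>t<n. expect_seq K q n (\<lambda>ks. bad n ks t)))"
    by (simp add: E_cmult E_add E_sum E_one[OF q_sum])
  also have "\<dots> \<le> (\<Sum>j<m. Bd j) * (1 + (\<Sum>t<n. Cb * (1 / (real (n - t))^2)))"
    using Eb SB by (intro mult_left_mono add_left_mono sum_mono) auto
  also have "(\<Sum>t<n. Cb * (1 / (real (n - t))^2)) \<le> Cb * 2"
    unfolding sum_distrib_left[symmetric] using sq_bound Cb0 by (rule mult_left_mono)
  then have "(\<Sum>j<m. Bd j) * (1 + (\<Sum>t<n. Cb * (1 / (real (n - t))^2))) \<le> (\<Sum>j<m. Bd j) * (1 + Cb * 2)"
    using SB by (intro mult_left_mono) auto
  finally show ?thesis unfolding CV_def Cb_def by (simp add: mult.commute)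
qed

end

theorem theorem2:
  fixes m K :: nat
    and q w :: "nat \<Rightarrow> real"
    and u :: "nat \<Rightarrow> nat \<Rightarrow> real"
    and d Delta :: "nat \<Rightarrow> real"
    and plo pup :: real
    and sol :: "(nat \<Rightarrow> real) \<Rightarrow> nat \<Rightarrow> nat \<Rightarrow> real"
  assumes q_pos: "\<forall>k<K. 0 < q k"
    and q_sum: "(\<Sum>k<K. q k) = 1"
    and w_pos: "\<forall>k<K. 0 < w k"
    and u_nonneg: "\<forall>k<K. \<forall>j<m. 0 \<le> u k j"
    and u_good: "\<forall>j<m. \<exists>k<K. 0 < u k j"
    and d_pos: "\<forall>j<m. 0 < d j"
    and Delta: "\<forall>j<m. 0 < Delta j \<and> Delta j < d j"
    and p_bounds_pos: "0 < plo" "plo \<le> pup"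
    and sol_opt: "\<forall>d'. in_box m d Delta d' \<longrightarrow> CE_optimal m K q w u d' (sol d')"
    and prices_bounded: "\<forall>n ks t p. ks \<in> PiE {..<n} (\<lambda>_. {..<K}) \<and> t < n \<and>
          CE_dual_optimal m K q w u (pol_used_d m d Delta sol n ks t) p
          \<longrightarrow> (\<forall>j<m. plo \<le> p j \<and> p j \<le> pup)"
  shows "(\<exists>C. \<forall>\<^sub>F n in sequentially. exp_violation m K q d Delta sol n \<le> C) \<and>
         (\<exists>C. \<forall>\<^sub>F n in sequentially. regret m K q w u d Delta sol n \<le> C * ln (real n))"
proof -
  interpret mk m K q w u d Delta sol
    by (unfold_locales) (use q_pos q_sum w_pos u_nonneg u_good d_pos Delta sol_opt in auto)
  have viol: "\<exists>C. \<forall>\<^sub>F n in sequentially. exp_violation m K q d Delta sol n \<le> C"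
  proof (intro exI)
    show "\<forall>\<^sub>F n in sequentially. exp_violation m K q d Delta sol n \<le> CV"
      using viol_bound by (intro eventually_sequentiallyI[of 1]) simp
  qed
  have reg: "\<exists>C. \<forall>\<^sub>F n in sequentially. regret m K q w u d Delta sol n \<le> C * ln (real n)"
  proof (intro exI)
    show "\<forall>\<^sub>F n in sequentially. regret m K q w u d Delta sol n \<le> (2 * CR) * ln (real n)"
    proof (intro eventually_sequentiallyI[of 3])
      fix n :: nat assume n: "3 \<le> n"
      have l1: "1 \<le> ln (real n)"
      proof -
        have "exp 1 \<le> real n" using exp_le n by linarith
        then show ?thesis using n by (subst ln_ge_iff) auto
      qed
      have "regret m K q w u d Delta sol n \<le> CR * (1 + ln (real n))" using n by (intro regret_bound) simp
      also have "\<dots> \<le> CR * (2 * ln (real n))" using l1 CR_nonneg by (intro mult_left_mono) auto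
      finally show "regret m K q w u d Delta sol n \<le> (2 * CR) * ln (real n)" by simp
    qed
  qed
  show ?thesis using viol reg by blast
qed

end
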